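(* A sequent $\Gamma\Rightarrow\Delta$ is derivable in $\mathsf{S.ConstCK}$ if and only if $\iota(\Gamma\Rightarrow\Delta)$ is derivable in $\mathsf{ConstCK}$.
   Context: Language $\mathcal{L}$: formulas $\varphi ::= p \mid \bot \mid \varphi\wedge\varphi \mid \varphi\vee\varphi \mid \varphi\to\varphi \mid \varphi \mathrel{\Box\!\!\to} \varphi \mid \varphi \mathrel{\Diamond\!\!\to}\varphi$; $\neg\varphi:=\varphi\to\bot$, $\top:=\neg\bot$, $\varphi\leftrightarrow\psi:=(\varphi\to\psi)\wedge(\psi\to\varphi)$. Hilbert system $\mathsf{ConstCK}$: any axiomatisation of intuitionistic propositional logic in $\mathcal{L}$ with modus ponens, plus axioms CM$_\Box$: $(\varphi\mathrel{\Box\!\!\to}\psi\wedge\chi)\to(\varphi\mathrel{\Box\!\!\to}\psi)\wedge(\varphi\mathrel{\Box\!\!\to}\chi)$; CC$_\Box$: $(\varphi\mathrel{\Box\!\!\to}\psi)\wedge(\varphi\mathrel{\Box\!\!\to}\chi)\to(\varphi\mathrel{\Box\!\!\to}\psi\wedge\chi)$; CN$_\Box$: $\varphi\mathrel{\Box\!\!\to}\top$; CN$_\Diamond$: $\neg(\varphi\mathrel{\Diamond\!\!\to}\bot)$; CK$_\Diamond$: $(\varphi\mathrel{\Box\!\!\to}(\psi\to\chi))\to((\varphi\mathrel{\Diamond\!\!\to}\psi)\to(\varphi\mathrel{\Diamond\!\!\to}\chi))$; and rules RA$_\Box$: from $\varphi\leftrightarrow\rho$ infer $(\varphi\mathrel{\Box\!\!\to}\psi)\leftrightarrow(\rho\mathrel{\Box\!\!\to}\psi)$;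 RC$_\Box$: from $\psi\leftrightarrow\chi$ infer $(\varphi\mathrel{\Box\!\!\to}\psi)\leftrightarrow(\varphi\mathrel{\Box\!\!\to}\chi)$; RA$_\Diamond$, RC$_\Diamond$: the same with $\mathrel{\Diamond\!\!\to}$. A sequent $\Gamma\Rightarrow\Delta$ is a pair of finite multisets of formulas with $|\Delta|\le1$; $\varphi\Leftrightarrow\rho$ abbreviates the two sequents $\varphi\Rightarrow\rho$, $\rho\Rightarrow\varphi$. Formula interpretation: $\iota(\Gamma\Rightarrow\Delta)=\bigwedge\Gamma\to\bigvee\Delta$ if $\Gamma\neq\emptyset$ and $\bigvee\Delta$ if $\Gamma=\emptyset$, with $\bigvee\emptyset=\bot$. Rules of $\mathsf{S.ConstCK}$ (premisses / conclusion, $0\le|\Delta|\le1$, $n\ge0$): init: $\Gamma,p\Rightarrow p$; $\bot_L$: $\Gamma,\bot\Rightarrow\Delta$; $\wedge_L$: $\Gamma,\varphi,\psi\Rightarrow\Delta$ / $\Gamma,\varphi\wedge\psi\Rightarrow\Delta$; $\wedge_R$: $\Gamma\Rightarrow\varphi$, $\Gamma\Rightarrow\psi$ / $\Gamma\Rightarrow\varphi\wedge\psi$; $\vee_L$: $\Gamma,\varphi\Rightarrow\Delta$, $\Gamma,\psi\Rightarrow\Delta$ / $\Gamma,\varphi\vee\psi\Rightarrow\Delta$; $\vee_R^1$: $\Gamma\Rightarrow\varphi$ / $\Gamma\Rightarrow\varphi\vee\psi$; $\vee_R^2$: $\Gamma\Rightarrow\psi$ / $\Gamma\Rightarrow\varphi\vee\psi$;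 $\to_R$: $\Gamma,\varphi\Rightarrow\psi$ / $\Gamma\Rightarrow\varphi\to\psi$; $\to_L$: $\Gamma,\varphi\to\psi\Rightarrow\varphi$, $\Gamma,\psi\Rightarrow\Delta$ / $\Gamma,\varphi\to\psi\Rightarrow\Delta$; $\Box$: $\{\varphi\Leftrightarrow\rho_i\}_{i\le n}$, $\sigma_1,\dots,\sigma_n\Rightarrow\psi$ / $\Gamma,\rho_1\mathrel{\Box\!\!\to}\sigma_1,\dots,\rho_n\mathrel{\Box\!\!\to}\sigma_n\Rightarrow\varphi\mathrel{\Box\!\!\to}\psi$; $\Diamond$: $\{\varphi\Leftrightarrow\rho_i\}_{i\le n}$, $\varphi\Leftrightarrow\eta$, $\sigma_1,\dots,\sigma_n,\psi\Rightarrow\vartheta$ / $\Gamma,\rho_1\mathrel{\Box\!\!\to}\sigma_1,\dots,\rho_n\mathrel{\Box\!\!\to}\sigma_n,\varphi\mathrel{\Diamond\!\!\to}\psi\Rightarrow\eta\mathrel{\Diamond\!\!\to}\vartheta$; $\Box\Diamond$: $\{\varphi\Leftrightarrow\rho_i\}_{i\le n}$, $\sigma_1,\dots,\sigma_n,\psi\Rightarrow$ / $\Gamma,\rho_1\mathrel{\Box\!\!\to}\sigma_1,\dots,\rho_n\mathrel{\Box\!\!\to}\sigma_n,\varphi\mathrel{\Diamond\!\!\to}\psi\Rightarrow\Delta$. *)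

theory Defs
  imports "HOL-Library.Multiset"
begin

datatype 'a fm =
    Atom 'a
  | Bot
  | And "'a fm" "'a fm"
  | Or "'a fm" "'a fm"
  | Imp "'a fm" "'a fm"
  | BoxArr "'a fm" "'a fm"
  | DiaArr "'a fm" "'a fm"

definition Neg :: "'a fm \<Rightarrow> 'a fm" where "Neg \<phi> = Imp \<phi> Bot"
definition Top :: "'a fm" where "Top = Neg Bot"
definition Iff :: "'a fm \<Rightarrow> 'a fm \<Rightarrow> 'a fm" where
  "Iff \<phi> \<psi> = And (Imp \<phi> \<psi>) (Imp \<psi> \<phi>)"

inductive ConstCK :: "'a fm \<Rightarrow> bool" where
  A1: "ConstCK (Imp \<phi> (Imp \<psi> \<phi>))"
| A2: "ConstCK (Imp (Imp \<phi> (Imp \<psi> \<chi>)) (Imp (Imp \<phi> \<psi>) (Imp \<phi> \<chi>)))"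
| A3: "ConstCK (Imp (And \<phi> \<psi>) \<phi>)"
| A4: "ConstCK (Imp (And \<phi> \<psi>) \<psi>)"
| A5: "ConstCK (Imp \<phi> (Imp \<psi> (And \<phi> \<psi>)))"
| A6: "ConstCK (Imp \<phi> (Or \<phi> \<psi>))"
| A7: "ConstCK (Imp \<psi> (Or \<phi> \<psi>))"
| A8: "ConstCK (Imp (Imp \<phi> \<chi>) (Imp (Imp \<psi> \<chi>) (Imp (Or \<phi> \<psi>) \<chi>)))"
| A9: "ConstCK (Imp Bot \<phi>)"
| MP: "ConstCK (Imp \<phi> \<psi>) \<Longrightarrow> ConstCK \<phi> \<Longrightarrow> ConstCK \<psi>"
| CM_box: "ConstCK (Imp (BoxArr \<phi> (And \<psi> \<chi>)) (And (BoxArr \<phi> \<psi>) (BoxArr \<phi> \<chi>)))"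
| CC_box: "ConstCK (Imp (And (BoxArr \<phi> \<psi>) (BoxArr \<phi> \<chi>)) (BoxArr \<phi> (And \<psi> \<chi>)))"
| CN_box: "ConstCK (BoxArr \<phi> Top)"
| CN_dia: "ConstCK (Neg (DiaArr \<phi> Bot))"
| CK_dia: "ConstCK (Imp (BoxArr \<phi> (Imp \<psi> \<chi>)) (Imp (DiaArr \<phi> \<psi>) (DiaArr \<phi> \<chi>)))"
| RA_box: "ConstCK (Iff \<phi> \<rho>) \<Longrightarrow> ConstCK (Iff (BoxArr \<phi> \<psi>) (BoxArr \<rho> \<psi>))"
| RC_box: "ConstCK (Iff \<psi> \<chi>) \<Longrightarrow> ConstCK (Iff (BoxArr \<phi> \<psi>) (BoxArr \<phi> \<chi>))"
| RA_dia: "ConstCK (Iff \<phi> \<rho>) \<Longrightarrow> ConstCK (Iff (DiaArr \<phi> \<psi>) (DiaArr \<rho> \<psi>))"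
| RC_dia: "ConstCK (Iff \<psi> \<chi>) \<Longrightarrow> ConstCK (Iff (DiaArr \<phi> \<psi>) (DiaArr \<phi> \<chi>))"

text \<open>A sequent is a pair of finite multisets (antecedent,
succedent); every rule only produces sequents with succedent of size at most 1.
The n pairs (rho_i, sigma_i) of the modal rules are given as a list.\<close>
inductive SConstCK :: "'a fm multiset \<Rightarrow> 'a fm multiset \<Rightarrow> bool" where
  init: "SConstCK (add_mset (Atom p) \<Gamma>) {#Atom p#}"
| botL: "size \<Delta> \<le> 1 \<Longrightarrow> SConstCK (add_mset Bot \<Gamma>) \<Delta>"
| andL: "SConstCK (add_mset \<phi> (add_mset \<psi> \<Gamma>)) \<Delta> \<Longrightarrow> SConstCK (add_mset (And \<phi> \<psi>) \<Gamma>) \<Delta>"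
| andR: "SConstCK \<Gamma> {#\<phi>#} \<Longrightarrow> SConstCK \<Gamma> {#\<psi>#} \<Longrightarrow> SConstCK \<Gamma> {#And \<phi> \<psi>#}"
| orL: "SConstCK (add_mset \<phi> \<Gamma>) \<Delta> \<Longrightarrow> SConstCK (add_mset \<psi> \<Gamma>) \<Delta> \<Longrightarrow>
        SConstCK (add_mset (Or \<phi> \<psi>) \<Gamma>) \<Delta>"
| orR1: "SConstCK \<Gamma> {#\<phi>#} \<Longrightarrow> SConstCK \<Gamma> {#Or \<phi> \<psi>#}"
| orR2: "SConstCK \<Gamma> {#\<psi>#} \<Longrightarrow> SConstCK \<Gamma> {#Or \<phi> \<psi>#}"
| impR: "SConstCK (add_mset \<phi> \<Gamma>) {#\<psi>#} \<Longrightarrow> SConstCK \<Gamma> {#Imp \<phi> \<psi>#}"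
| impL: "SConstCK (add_mset (Imp \<phi> \<psi>) \<Gamma>) {#\<phi>#} \<Longrightarrow> SConstCK (add_mset \<psi> \<Gamma>) \<Delta> \<Longrightarrow>
        SConstCK (add_mset (Imp \<phi> \<psi>) \<Gamma>) \<Delta>"
| box: "\<forall>(\<rho>, \<sigma>) \<in> set ps. SConstCK {#\<phi>#} {#\<rho>#} \<and> SConstCK {#\<rho>#} {#\<phi>#} \<Longrightarrow>
        SConstCK (mset (map snd ps)) {#\<psi>#} \<Longrightarrow>
        SConstCK (\<Gamma> + mset (map (\<lambda>(\<rho>, \<sigma>). BoxArr \<rho> \<sigma>) ps)) {#BoxArr \<phi> \<psi>#}"
| dia: "\<forall>(\<rho>, \<sigma>) \<in> set ps. SConstCK {#\<phi>#} {#\<rho>#} \<and> SConstCK {#\<rho>#} {#\<phi>#} \<Longrightarrow>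
        SConstCK {#\<phi>#} {#\<eta>#} \<Longrightarrow> SConstCK {#\<eta>#} {#\<phi>#} \<Longrightarrow>
        SConstCK (add_mset \<psi> (mset (map snd ps))) {#\<theta>#} \<Longrightarrow>
        SConstCK (add_mset (DiaArr \<phi> \<psi>) (\<Gamma> + mset (map (\<lambda>(\<rho>, \<sigma>). BoxArr \<rho> \<sigma>) ps)))
                 {#DiaArr \<eta> \<theta>#}"
| boxdia: "\<forall>(\<rho>, \<sigma>) \<in> set ps. SConstCK {#\<phi>#} {#\<rho>#} \<and> SConstCK {#\<rho>#} {#\<phi>#} \<Longrightarrow>
        SConstCK (add_mset \<psi> (mset (map snd ps))) {#} \<Longrightarrow> size \<Delta> \<le> 1 \<Longrightarrow>
        SConstCK (add_mset (DiaArr \<phi> \<psi>) (\<Gamma> + mset (map (\<lambda>(\<rho>, \<sigma>). BoxArr \<rho> \<sigma>) ps))) \<Delta>"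

fun conj_list :: "'a fm list \<Rightarrow> 'a fm" where
  "conj_list [] = Top"
| "conj_list [\<phi>] = \<phi>"
| "conj_list (\<phi> # \<psi> # xs) = And \<phi> (conj_list (\<psi> # xs))"

fun disj_list :: "'a fm list \<Rightarrow> 'a fm" where
  "disj_list [] = Bot"
| "disj_list [\<phi>] = \<phi>"
| "disj_list (\<phi> # \<psi> # xs) = Or \<phi> (disj_list (\<psi> # xs))"

text \<open>Formula interpretation of a sequent whose antecedent is enumerated by the list xs
and whose succedent is enumerated by ys.\<close>
definition iota :: "'a fm list \<Rightarrow> 'a fm list \<Rightarrow> 'a fm" where
  "iota xs ys = (if xs = [] then disj_list ys else Imp (conj_list xs) (disj_list ys))"

end

theory Submission
  imports Defs
begin


inductive HD :: "'a fm set \<Rightarrow> 'a fm \<Rightarrow> bool" for H where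
  hyp: "f \<in> H \<Longrightarrow> HD H f"
| ax: "ConstCK f \<Longrightarrow> HD H f"
| mp: "HD H (Imp f g) \<Longrightarrow> HD H f \<Longrightarrow> HD H g"

lemma HD_subst: "HD H f \<Longrightarrow> (\<And>h. h \<in> H \<Longrightarrow> HD H' h) \<Longrightarrow> HD H' f"
  by (induction rule: HD.induct) (auto intro: HD.intros)

lemma HD_mono: "HD H f \<Longrightarrow> H \<subseteq> H' \<Longrightarrow> HD H' f"
  by (erule HD_subst) (auto intro: HD.hyp)

lemma HD_empty: "HD {} f \<Longrightarrow> ConstCK f"
  by (induction rule: HD.induct) (auto intro: ConstCK.MP)

lemma imp_refl: "ConstCK (Imp f f)"
  by (meson ConstCK.A1 ConstCK.A2 ConstCK.MP)

lemma deduction: "HD (insert a H) b \<Longrightarrow> HD H (Imp a b)"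
proof (induction rule: HD.induct)
  case (hyp f) then show ?case
    by (metis HD.ax HD.hyp HD.mp ConstCK.A1 imp_refl insertE)
next
  case (ax f) then show ?case by (meson HD.ax HD.mp ConstCK.A1)
next
  case (mp f g) then show ?case by (meson HD.ax HD.mp ConstCK.A2)
qed

lemma mp_ax: "ConstCK (Imp f g) \<Longrightarrow> HD H f \<Longrightarrow> HD H g"
  by (rule HD.mp[OF HD.ax])

lemma mp_ax2: "ConstCK (Imp f (Imp g h)) \<Longrightarrow> HD H f \<Longrightarrow> HD H g \<Longrightarrow> HD H h"
  by (meson mp_ax HD.mp)

lemma HD_imp: "HD {a} b \<Longrightarrow> ConstCK (Imp a b)"
  using deduction HD_empty by blast

lemma iffI_C: "ConstCK (Imp a b) \<Longrightarrow> ConstCK (Imp b a) \<Longrightarrow> ConstCK (Iff a b)"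
  unfolding Iff_def by (meson ConstCK.A5 ConstCK.MP)
lemma iffD1_C: "ConstCK (Iff a b) \<Longrightarrow> ConstCK (Imp a b)"
  unfolding Iff_def by (meson ConstCK.A3 ConstCK.MP)
lemma iffD2_C: "ConstCK (Iff a b) \<Longrightarrow> ConstCK (Imp b a)"
  unfolding Iff_def by (meson ConstCK.A4 ConstCK.MP)

lemma Top_thm: "ConstCK Top"
  unfolding Top_def Neg_def by (rule imp_refl)

lemma Nec: "ConstCK a \<Longrightarrow> HD H (BoxArr f a)"
proof -
  assume a: "ConstCK a"
  have "ConstCK (Imp Top a)" using a by (meson ConstCK.A1 ConstCK.MP)
  moreover have "ConstCK (Imp a Top)" using Top_thm by (meson ConstCK.A1 ConstCK.MP)
  ultimately have "ConstCK (Iff Top a)" by (rule iffI_C)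
  then have "ConstCK (Iff (BoxArr f Top) (BoxArr f a))" by (rule ConstCK.RC_box)
  then have "ConstCK (Imp (BoxArr f Top) (BoxArr f a))" by (rule iffD1_C)
  then show ?thesis using ConstCK.CN_box by (meson mp_ax HD.ax)
qed

lemma RM: "ConstCK (Imp a b) \<Longrightarrow> HD H (BoxArr f a) \<Longrightarrow> HD H (BoxArr f b)"
proof -
  assume ab: "ConstCK (Imp a b)" and h: "HD H (BoxArr f a)"
  have "HD {a} (And a b)"
    by (rule mp_ax2[OF ConstCK.A5]) (auto intro: HD.hyp mp_ax[OF ab])
  then have "ConstCK (Imp a (And a b))" by (rule HD_imp)
  then have "ConstCK (Iff a (And a b))" using ConstCK.A3 by (rule iffI_C)
  then have "ConstCK (Imp (BoxArr f a) (BoxArr f (And a b)))"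
    by (rule iffD1_C[OF ConstCK.RC_box])
  then have "HD H (BoxArr f (And a b))" using h by (rule mp_ax)
  then have "HD H (And (BoxArr f a) (BoxArr f b))" by (rule mp_ax[OF ConstCK.CM_box])
  then show ?thesis by (rule mp_ax[OF ConstCK.A4])
qed

lemma CCh: "HD H (BoxArr f a) \<Longrightarrow> HD H (BoxArr f b) \<Longrightarrow> HD H (BoxArr f (And a b))"
  by (rule mp_ax[OF ConstCK.CC_box], rule mp_ax2[OF ConstCK.A5])

fun conjT :: "'a fm list \<Rightarrow> 'a fm" where
  "conjT [] = Top"
| "conjT (x # xs) = And x (conjT xs)"

lemma conjT_mem: "x \<in> set xs \<Longrightarrow> HD {conjT xs} x"
proof (induction xs)
  case Nil then show ?case by simp
next
  case (Cons y ys)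
  show ?case
  proof (cases "x = y")
    case True then show ?thesis by (auto intro: mp_ax[OF ConstCK.A3] HD.hyp)
  next
    case False
    then have "HD {conjT ys} x" using Cons by auto
    then show ?thesis
      by (rule HD_subst) (auto intro: mp_ax[OF ConstCK.A4] HD.hyp)
  qed
qed

lemma conjT_box: "(\<forall>s\<in>set ss. HD H (BoxArr f s)) \<Longrightarrow> HD H (BoxArr f (conjT ss))"
  by (induction ss) (auto intro: Nec Top_thm CCh)

lemma box_list: "(\<forall>s\<in>set ss. HD H (BoxArr f s)) \<Longrightarrow> HD (set ss) g \<Longrightarrow> HD H (BoxArr f g)"
proof -
  assume a: "\<forall>s\<in>set ss. HD H (BoxArr f s)" and b: "HD (set ss) g"
  have "HD {conjT ss} g" using b by (rule HD_subst) (rule conjT_mem)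
  then have "ConstCK (Imp (conjT ss) g)" by (rule HD_imp)
  then show ?thesis using conjT_box[OF a] by (rule RM)
qed

lemma RA_app: "ConstCK (Iff f r) \<Longrightarrow> HD H (BoxArr r s) \<Longrightarrow> HD H (BoxArr f s)"
  by (rule mp_ax[OF iffD2_C[OF ConstCK.RA_box]])

lemma RAd_app: "ConstCK (Iff f r) \<Longrightarrow> HD H (DiaArr f s) \<Longrightarrow> HD H (DiaArr r s)"
  by (rule mp_ax[OF iffD1_C[OF ConstCK.RA_dia]])

definition dj :: "'a fm multiset \<Rightarrow> 'a fm" where
  "dj D = (if D = {#} then Bot else (SOME d. d \<in># D))"

lemma dj_simps[simp]: "dj {#} = Bot" "dj {#d#} = d"
  by (auto simp: dj_def)

lemma side_iff: "HD {f} r \<Longrightarrow> HD {r} f \<Longrightarrow> ConstCK (Iff f r)"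
  by (intro iffI_C HD_imp)

lemma soundness: "SConstCK G D \<Longrightarrow> HD (set_mset G) (dj D)"
proof (induction rule: SConstCK.induct)
  case (init p G) then show ?case by (auto intro: HD.hyp)
next
  case (botL D G) then show ?case by (auto intro: HD.hyp mp_ax[OF ConstCK.A9])
next
  case (andL f g G D)
  from andL.IH show ?case
  proof (rule HD_subst)
    fix h assume "h \<in> set_mset (add_mset f (add_mset g G))"
    moreover have "HD (set_mset (add_mset (And f g) G)) (And f g)" by (auto intro: HD.hyp)
    ultimately show "HD (set_mset (add_mset (And f g) G)) h"
      by (auto intro: HD.hyp mp_ax[OF ConstCK.A3] mp_ax[OF ConstCK.A4])
  qed
next
  case (andR G f g) then show ?case by (auto intro: mp_ax2[OF ConstCK.A5])
next
  case (orL f G D g)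
  have 1: "HD (set_mset G) (Imp f (dj D))" using orL.IH(1) by (auto intro: deduction)
  have 2: "HD (set_mset G) (Imp g (dj D))" using orL.IH(2) by (auto intro: deduction)
  have "HD (set_mset G) (Imp (Or f g) (dj D))" using 1 2 by (rule mp_ax2[OF ConstCK.A8])
  then have "HD (set_mset (add_mset (Or f g) G)) (Imp (Or f g) (dj D))" by (rule HD_mono) auto
  then show ?case by (rule HD.mp) (auto intro: HD.hyp)
next
  case (orR1 G f g) then show ?case by (auto intro: mp_ax[OF ConstCK.A6])
next
  case (orR2 G g f) then show ?case by (auto intro: mp_ax[OF ConstCK.A7])
next
  case (impR f G g) then show ?case by (auto intro: deduction)
next
  case (impL f g G D)
  have 1: "HD (set_mset (add_mset (Imp f g) G)) g"
    using impL.IH(1) by (rule HD.mp[rotated]) (auto intro: HD.hyp)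
  from impL.IH(2) show ?case
    by (rule HD_subst) (use 1 in \<open>auto intro: HD.hyp\<close>)
next
  case (box ps f g G)
  let ?H = "set_mset (G + mset (map (\<lambda>(\<rho>, \<sigma>). BoxArr \<rho> \<sigma>) ps))"
  have "\<forall>s\<in>set (map snd ps). HD ?H (BoxArr f s)"
  proof
    fix s assume "s \<in> set (map snd ps)"
    then obtain r where rs: "(r, s) \<in> set ps" by auto
    then have "HD {f} r" "HD {r} f" using box.IH(1) by auto
    then have "ConstCK (Iff f r)" by (rule side_iff)
    moreover have "HD ?H (BoxArr r s)" using rs by (auto intro!: HD.hyp)
    ultimately show "HD ?H (BoxArr f s)" by (rule RA_app)
  qed
  moreover have "HD (set (map snd ps)) g" using box.IH(2) by simp
  ultimately show ?case by (simp only: dj_simps) (rule box_list)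
next
  case (dia ps f e g t G)
  let ?H = "set_mset (add_mset (DiaArr f g) (G + mset (map (\<lambda>(\<rho>, \<sigma>). BoxArr \<rho> \<sigma>) ps)))"
  have "\<forall>s\<in>set (map snd ps). HD ?H (BoxArr f s)"
  proof
    fix s assume "s \<in> set (map snd ps)"
    then obtain r where rs: "(r, s) \<in> set ps" by auto
    then have "HD {f} r" "HD {r} f" using dia.IH(1) by auto
    then have "ConstCK (Iff f r)" by (rule side_iff)
    moreover have "HD ?H (BoxArr r s)" using rs by (auto intro!: HD.hyp)
    ultimately show "HD ?H (BoxArr f s)" by (rule RA_app)
  qed
  moreover have "HD (set (map snd ps)) (Imp g t)" using dia.IH(4) by (auto intro: deduction)
  ultimately have "HD ?H (BoxArr f (Imp g t))" by (rule box_list)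
  then have "HD ?H (DiaArr f t)" by (rule mp_ax2[OF ConstCK.CK_dia]) (auto intro: HD.hyp)
  moreover have "ConstCK (Iff f e)" using dia.IH(2,3) by (auto intro: side_iff)
  ultimately show ?case by (simp only: dj_simps) (rule RAd_app[rotated])
next
  case (boxdia ps f g D G)
  let ?H = "set_mset (add_mset (DiaArr f g) (G + mset (map (\<lambda>(\<rho>, \<sigma>). BoxArr \<rho> \<sigma>) ps)))"
  have "\<forall>s\<in>set (map snd ps). HD ?H (BoxArr f s)"
  proof
    fix s assume "s \<in> set (map snd ps)"
    then obtain r where rs: "(r, s) \<in> set ps" by auto
    then have "HD {f} r" "HD {r} f" using boxdia.IH(1) by auto
    then have "ConstCK (Iff f r)" by (rule side_iff)
    moreover have "HD ?H (BoxArr r s)" using rs by (auto intro!: HD.hyp)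
    ultimately show "HD ?H (BoxArr f s)" by (rule RA_app)
  qed
  moreover have "HD (set (map snd ps)) (Imp g Bot)" using boxdia.IH(2) by (auto intro: deduction)
  ultimately have "HD ?H (BoxArr f (Imp g Bot))" by (rule box_list)
  then have "HD ?H (DiaArr f Bot)" by (rule mp_ax2[OF ConstCK.CK_dia]) (auto intro: HD.hyp)
  then have "HD ?H Bot" by (rule mp_ax[OF ConstCK.CN_dia[unfolded Neg_def]])
  then show ?case by (rule mp_ax[OF ConstCK.A9])
qed

lemma conj_list_mem: "x \<in> set xs \<Longrightarrow> HD {conj_list xs} x"
proof (induction xs rule: conj_list.induct)
  case 1 then show ?case by simp
next
  case (2 f) then show ?case by (auto intro: HD.hyp)
next
  case (3 f g xs)
  show ?case
  proof (cases "x = f")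
    case True then show ?thesis by (auto intro: mp_ax[OF ConstCK.A3] HD.hyp)
  next
    case False
    then have "HD {conj_list (g # xs)} x" using 3 by auto
    then show ?thesis
      by (rule HD_subst) (auto intro: mp_ax[OF ConstCK.A4] HD.hyp)
  qed
qed

lemma sound_iota:
  assumes "SConstCK G D" "size D \<le> 1" "mset xs = G" "mset ys = D"
  shows "ConstCK (iota xs ys)"
proof -
  have h: "HD (set xs) (dj D)" using soundness[OF assms(1)] assms(3) by auto
  have "dj D = disj_list ys"
  proof (cases ys)
    case Nil then show ?thesis using assms by simp
  next
    case (Cons y ys')
    then have "ys' = []" using assms(2,4) by (cases ys') auto
    then show ?thesis using Cons assms(4) by auto
  qed
  with h have h2: "HD (set xs) (disj_list ys)" by simp
  show ?thesis
  proof (cases "xs = []")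
    case True then show ?thesis using h2 by (simp add: iota_def HD_empty)
  next
    case False
    have "HD {conj_list xs} (disj_list ys)" using h2 by (rule HD_subst) (rule conj_list_mem)
    then show ?thesis using False by (simp add: iota_def HD_imp)
  qed
qed


abbreviation bx :: "'a fm \<times> 'a fm \<Rightarrow> 'a fm" where "bx \<equiv> (\<lambda>(\<rho>, \<sigma>). BoxArr \<rho> \<sigma>)"

definition side :: "'a fm \<Rightarrow> ('a fm \<times> 'a fm) multiset \<Rightarrow> bool" where
  "side f P = (\<forall>(r, s)\<in>#P. SConstCK {#f#} {#r#} \<and> SConstCK {#r#} {#f#})"

inductive SCh :: "nat \<Rightarrow> 'a fm multiset \<Rightarrow> 'a fm multiset \<Rightarrow> bool" where
  init: "SCh n (add_mset (Atom p) G) {#Atom p#}"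
| botL: "size D \<le> 1 \<Longrightarrow> SCh n (add_mset Bot G) D"
| andL: "SCh n (add_mset f (add_mset g G)) D \<Longrightarrow> SCh (Suc n) (add_mset (And f g) G) D"
| andR: "SCh n G {#f#} \<Longrightarrow> SCh n G {#g#} \<Longrightarrow> SCh (Suc n) G {#And f g#}"
| orL: "SCh n (add_mset f G) D \<Longrightarrow> SCh n (add_mset g G) D \<Longrightarrow> SCh (Suc n) (add_mset (Or f g) G) D"
| orR1: "SCh n G {#f#} \<Longrightarrow> SCh (Suc n) G {#Or f g#}"
| orR2: "SCh n G {#g#} \<Longrightarrow> SCh (Suc n) G {#Or f g#}"
| impR: "SCh n (add_mset f G) {#g#} \<Longrightarrow> SCh (Suc n) G {#Imp f g#}"
| impL: "SCh n (add_mset (Imp f g) G) {#f#} \<Longrightarrow> SCh n (add_mset g G) D \<Longrightarrow>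
         SCh (Suc n) (add_mset (Imp f g) G) D"
| box: "side f P \<Longrightarrow> SCh n (image_mset snd P) {#g#} \<Longrightarrow>
        SCh (Suc n) (G + image_mset bx P) {#BoxArr f g#}"
| dia: "side f P \<Longrightarrow> SConstCK {#f#} {#e#} \<Longrightarrow> SConstCK {#e#} {#f#} \<Longrightarrow>
        SCh n (add_mset g (image_mset snd P)) {#t#} \<Longrightarrow>
        SCh (Suc n) (add_mset (DiaArr f g) (G + image_mset bx P)) {#DiaArr e t#}"
| boxdia: "side f P \<Longrightarrow> SCh n (add_mset g (image_mset snd P)) {#} \<Longrightarrow> size D \<le> 1 \<Longrightarrow>
        SCh (Suc n) (add_mset (DiaArr f g) (G + image_mset bx P)) D"

lemma SCh_mono: "SCh n G D \<Longrightarrow> n \<le> m \<Longrightarrow> SCh m G D"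
proof (induction arbitrary: m rule: SCh.induct)
  case (init n p G) show ?case by (rule SCh.init)
next
  case (botL D n G) then show ?case by (intro SCh.botL)
next
  case (andL n f g G D) then show ?case by (cases m) (auto intro: SCh.andL)
next
  case (andR n G f g) then show ?case by (cases m) (auto intro: SCh.andR)
next
  case (orL n f G D g) then show ?case by (cases m) (auto intro: SCh.orL)
next
  case (orR1 n G f g) then show ?case by (cases m) (auto intro: SCh.orR1)
next
  case (orR2 n G g f) then show ?case by (cases m) (auto intro: SCh.orR2)
next
  case (impR n f G g) then show ?case by (cases m) (auto intro: SCh.impR)
next
  case (impL n f g G D) then show ?case by (cases m) (auto intro: SCh.impL)
next
  case (box f P n g G) then show ?case by (cases m) (auto intro: SCh.box)
next
  case (dia f P e n g t G) then show ?case by (cases m) (auto intro: SCh.dia)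
next
  case (boxdia f P n g D G) then show ?case by (cases m) (auto intro: SCh.boxdia)
qed

lemma side_mset: "side f (mset ps) = (\<forall>(r, s)\<in>set ps. SConstCK {#f#} {#r#} \<and> SConstCK {#r#} {#f#})"
  by (simp add: side_def)

lemma SCh_sound: "SCh n G D \<Longrightarrow> SConstCK G D"
proof (induction rule: SCh.induct)
  case (box f P n g G)
  obtain ps where ps: "P = mset ps" by (metis ex_mset)
  show ?case using box SConstCK.box[of ps f g G] unfolding ps by (simp add: side_mset)
next
  case (dia f P e n g t G)
  obtain ps where ps: "P = mset ps" by (metis ex_mset)
  show ?case using dia SConstCK.dia[of ps f e g t G] unfolding ps by (simp add: side_mset)
next
  case (boxdia f P n g D G)
  obtain ps where ps: "P = mset ps" by (metis ex_mset)
  show ?case using boxdia SConstCK.boxdia[of ps f g D G] unfolding ps by (simp add: side_mset)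
qed (auto intro: SConstCK.intros)

lemma SC_SCh: "SConstCK G D \<Longrightarrow> \<exists>n. SCh n G D"
proof (induction rule: SConstCK.induct)
  case (andR G f g)
  then obtain n1 n2 where "SCh n1 G {#f#}" "SCh n2 G {#g#}" by blast
  then have "SCh (max n1 n2) G {#f#}" "SCh (max n1 n2) G {#g#}" by (auto elim: SCh_mono)
  then show ?case by (blast intro: SCh.andR)
next
  case (orL f G D g)
  then obtain n1 n2 where "SCh n1 (add_mset f G) D" "SCh n2 (add_mset g G) D" by blast
  then have "SCh (max n1 n2) (add_mset f G) D" "SCh (max n1 n2) (add_mset g G) D" by (auto elim: SCh_mono)
  then show ?case by (blast intro: SCh.orL)
next
  case (impL f g G D)
  then obtain n1 n2 where "SCh n1 (add_mset (Imp f g) G) {#f#}" "SCh n2 (add_mset g G) D" by blast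
  then have "SCh (max n1 n2) (add_mset (Imp f g) G) {#f#}" "SCh (max n1 n2) (add_mset g G) D"
    by (auto elim: SCh_mono)
  then show ?case by (blast intro: SCh.impL)
next
  case (box ps f g G)
  then obtain n where "SCh n (image_mset snd (mset ps)) {#g#}" by auto
  then show ?case using box SCh.box[of f "mset ps" n g G] by (auto simp: side_mset)
next
  case (dia ps f e g t G)
  then obtain n where "SCh n (add_mset g (image_mset snd (mset ps))) {#t#}" by auto
  then show ?case using dia SCh.dia[of f "mset ps" e n g t G] by (auto simp: side_mset)
next
  case (boxdia ps f g D G)
  then obtain n where "SCh n (add_mset g (image_mset snd (mset ps))) {#}" by auto
  then show ?case using boxdia SCh.boxdia[of f "mset ps" n g D G] by (auto simp: side_mset)
qed (blast intro: SCh.intros)+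

lemma SC_iff: "SConstCK G D \<longleftrightarrow> (\<exists>n. SCh n G D)"
  using SC_SCh SCh_sound by blast

lemma init': "Atom p \<in># G \<Longrightarrow> SCh n G {#Atom p#}"
  by (metis SCh.init mset_add)
lemma botL': "Bot \<in># G \<Longrightarrow> size D \<le> 1 \<Longrightarrow> SCh n G D"
  by (metis SCh.botL mset_add)

lemma box_sub: "side f P \<Longrightarrow> SCh n (image_mset snd P) {#g#} \<Longrightarrow> image_mset bx P \<subseteq># G' \<Longrightarrow>
   SCh (Suc n) G' {#BoxArr f g#}"
  by (metis SCh.box subset_mset.diff_add)
lemma dia_sub: "side f P \<Longrightarrow> SConstCK {#f#} {#e#} \<Longrightarrow> SConstCK {#e#} {#f#} \<Longrightarrow>
        SCh n (add_mset g (image_mset snd P)) {#t#} \<Longrightarrow>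
        add_mset (DiaArr f g) (image_mset bx P) \<subseteq># G' \<Longrightarrow> SCh (Suc n) G' {#DiaArr e t#}"
  by (metis SCh.dia subset_mset.diff_add union_mset_add_mset_right)
lemma boxdia_sub: "side f P \<Longrightarrow> SCh n (add_mset g (image_mset snd P)) {#} \<Longrightarrow> size D \<le> 1 \<Longrightarrow>
        add_mset (DiaArr f g) (image_mset bx P) \<subseteq># G' \<Longrightarrow> SCh (Suc n) G' D"
  by (metis SCh.boxdia subset_mset.diff_add union_mset_add_mset_right)

lemma sub_lemma: "add_mset X G = G0 + B \<Longrightarrow> X \<notin># B \<Longrightarrow> B \<subseteq># G"
  unfolding subseteq_mset_def
proof (intro allI)
  fix a assume e: "add_mset X G = G0 + B" and n: "X \<notin># B"
  have "count (add_mset X G) a = count (G0 + B) a" using e by simp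
  then show "count B a \<le> count G a" using n by (cases "a = X") (auto simp: not_in_iff)
qed

lemma sub_plus: "B \<subseteq># G \<Longrightarrow> B \<subseteq># K + G"
  using mset_subset_eq_add_right subset_mset.order_trans by blast

lemma add_ne: "add_mset a G0 = add_mset X G \<Longrightarrow> a \<noteq> X \<Longrightarrow> \<exists>K. G0 = add_mset X K \<and> G = add_mset a K"
  by (auto simp: add_eq_conv_ex)

lemma nobox: "(\<forall>a b. X \<noteq> BoxArr a b) \<Longrightarrow> X \<notin># image_mset bx P"
  by auto
lemma nobox2: "(\<forall>a b. X \<noteq> BoxArr a b) \<Longrightarrow> (\<forall>a b. X \<noteq> DiaArr a b) \<Longrightarrow> X \<notin># add_mset (DiaArr f g) (image_mset bx P)"
  by auto


lemma mem_other: "add_mset a G0 = add_mset X G \<Longrightarrow> a \<noteq> X \<Longrightarrow> a \<in># G"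
  using add_ne by fastforce

lemma inv_and: "SCh n G' D \<Longrightarrow> G' = add_mset (And f g) G \<Longrightarrow> SCh n (add_mset f (add_mset g G)) D"
proof (induction arbitrary: G rule: SCh.induct)
  case (init n p G0) then show ?case by (intro init') (auto dest: mem_other)
next
  case (botL D n G0) then show ?case by (intro botL') (auto dest: mem_other)
next
  case (andL n a b G0 D)
  show ?case
  proof (cases "And a b = And f g")
    case True then have "a = f" "b = g" "G0 = G" using andL.prems by auto
    then show ?thesis using andL.hyps(1) by (auto intro: SCh_mono)
  next
    case False
    obtain K where K: "G0 = add_mset (And f g) K" "G = add_mset (And a b) K"
      using add_ne[OF andL.prems False] by blast
    have "SCh n (add_mset a (add_mset b (add_mset f (add_mset g K)))) D"
      using andL.IH[of "add_mset a (add_mset b K)"] K by (simp add: add_mset_commute)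
    then have "SCh (Suc n) (add_mset (And a b) (add_mset f (add_mset g K))) D" by (rule SCh.andL)
    then show ?thesis using K by (simp add: add_mset_commute)
  qed
next
  case (andR n G0 a b) then show ?case by (auto intro: SCh.andR)
next
  case (orL n a G0 D b)
  show ?case
  proof (cases "Or a b = And f g")
    case True then show ?thesis by simp
  next
    case False
    obtain K where K: "G0 = add_mset (And f g) K" "G = add_mset (Or a b) K"
      using add_ne[OF orL.prems False] by blast
    have "SCh n (add_mset a (add_mset f (add_mset g K))) D"
      using orL.IH(1)[of "add_mset a K"] K by (simp add: add_mset_commute)
    moreover have "SCh n (add_mset b (add_mset f (add_mset g K))) D"
      using orL.IH(2)[of "add_mset b K"] K by (simp add: add_mset_commute)
    ultimately have "SCh (Suc n) (add_mset (Or a b) (add_mset f (add_mset g K))) D" by (rule SCh.orL)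
    then show ?thesis using K by (simp add: add_mset_commute)
  qed
next
  case (orR1 n G0 a b) then show ?case by (auto intro: SCh.orR1)
next
  case (orR2 n G0 b a) then show ?case by (auto intro: SCh.orR2)
next
  case (impR n a G0 b)
  have "SCh n (add_mset a (add_mset f (add_mset g G))) {#b#}"
    using impR.IH[of "add_mset a G"] impR.prems by (simp add: add_mset_commute)
  then show ?case by (rule SCh.impR)
next
  case (impL n a b G0 D)
  show ?case
  proof (cases "Imp a b = And f g")
    case True then show ?thesis by simp
  next
    case False
    obtain K where K: "G0 = add_mset (And f g) K" "G = add_mset (Imp a b) K"
      using add_ne[OF impL.prems False] by blast
    have "SCh n (add_mset (Imp a b) (add_mset f (add_mset g K))) {#a#}"
      using impL.IH(1)[of "add_mset (Imp a b) K"] K by (simp add: add_mset_commute)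
    moreover have "SCh n (add_mset b (add_mset f (add_mset g K))) D"
      using impL.IH(2)[of "add_mset b K"] K by (simp add: add_mset_commute)
    ultimately have "SCh (Suc n) (add_mset (Imp a b) (add_mset f (add_mset g K))) D" by (rule SCh.impL)
    then show ?thesis using K by (simp add: add_mset_commute)
  qed
next
  case (box a P n b G0)
  have "image_mset bx P \<subseteq># G" using box.prems by (intro sub_lemma[of "And f g" G G0]) auto
  then have "image_mset bx P \<subseteq># add_mset f (add_mset g G)" by (auto intro: sub_plus[where K="add_mset f (add_mset g {#})", simplified])
  then show ?case using box.hyps by (intro box_sub[of a P n b])
next
  case (dia a P e n b t G0)
  have "add_mset (DiaArr a b) (image_mset bx P) \<subseteq># G"
    using dia.prems by (intro sub_lemma[of "And f g" G G0]) auto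
  then have "add_mset (DiaArr a b) (image_mset bx P) \<subseteq># add_mset f (add_mset g G)" by (auto intro: sub_plus[where K="add_mset f (add_mset g {#})", simplified])
  then show ?case using dia.hyps by (intro dia_sub[of a P e n b t])
next
  case (boxdia a P n b D G0)
  have "add_mset (DiaArr a b) (image_mset bx P) \<subseteq># G"
    using boxdia.prems by (intro sub_lemma[of "And f g" G G0]) auto
  then have "add_mset (DiaArr a b) (image_mset bx P) \<subseteq># add_mset f (add_mset g G)" by (auto intro: sub_plus[where K="add_mset f (add_mset g {#})", simplified])
  then show ?case using boxdia.hyps by (intro boxdia_sub[of a P n b])
qed

lemma inv_or1: "SCh n G' D \<Longrightarrow> G' = add_mset (Or f g) G \<Longrightarrow> SCh n (add_mset f G) D"
proof (induction arbitrary: G rule: SCh.induct)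
  case (init n p G0) then show ?case by (intro init') (auto dest: mem_other)
next
  case (botL D n G0) then show ?case by (intro botL') (auto dest: mem_other)
next
  case (andL n a b G0 D)
  show ?case
  proof (cases "And a b = Or f g")
    case True then show ?thesis by simp
  next
    case False
    obtain K where K: "G0 = add_mset (Or f g) K" "G = add_mset (And a b) K"
      using add_ne[OF andL.prems False] by blast
    have "SCh n (add_mset a (add_mset b (add_mset f K))) D"
      using andL.IH[of "add_mset a (add_mset b K)"] K by (simp add: add_mset_commute)
    then have "SCh (Suc n) (add_mset (And a b) (add_mset f K)) D" by (rule SCh.andL)
    then show ?thesis using K by (simp add: add_mset_commute)
  qed
next
  case (andR n G0 a b) then show ?case by (auto intro: SCh.andR)
next
  case (orL n a G0 D b)
  show ?case
  proof (cases "Or a b = Or f g")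
    case True then have "a = f" "b = g" "G0 = G" using orL.prems by auto
    then show ?thesis using orL.hyps(1) by (auto intro: SCh_mono)
  next
    case False
    obtain K where K: "G0 = add_mset (Or f g) K" "G = add_mset (Or a b) K"
      using add_ne[OF orL.prems False] by blast
    have "SCh n (add_mset a (add_mset f K)) D"
      using orL.IH(1)[of "add_mset a K"] K by (simp add: add_mset_commute)
    moreover have "SCh n (add_mset b (add_mset f K)) D"
      using orL.IH(2)[of "add_mset b K"] K by (simp add: add_mset_commute)
    ultimately have "SCh (Suc n) (add_mset (Or a b) (add_mset f K)) D" by (rule SCh.orL)
    then show ?thesis using K by (simp add: add_mset_commute)
  qed
next
  case (orR1 n G0 a b) then show ?case by (auto intro: SCh.orR1)
next
  case (orR2 n G0 b a) then show ?case by (auto intro: SCh.orR2)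
next
  case (impR n a G0 b)
  have "SCh n (add_mset a (add_mset f G)) {#b#}"
    using impR.IH[of "add_mset a G"] impR.prems by (simp add: add_mset_commute)
  then show ?case by (rule SCh.impR)
next
  case (impL n a b G0 D)
  show ?case
  proof (cases "Imp a b = Or f g")
    case True then show ?thesis by simp
  next
    case False
    obtain K where K: "G0 = add_mset (Or f g) K" "G = add_mset (Imp a b) K"
      using add_ne[OF impL.prems False] by blast
    have "SCh n (add_mset (Imp a b) (add_mset f K)) {#a#}"
      using impL.IH(1)[of "add_mset (Imp a b) K"] K by (simp add: add_mset_commute)
    moreover have "SCh n (add_mset b (add_mset f K)) D"
      using impL.IH(2)[of "add_mset b K"] K by (simp add: add_mset_commute)
    ultimately have "SCh (Suc n) (add_mset (Imp a b) (add_mset f K)) D" by (rule SCh.impL)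
    then show ?thesis using K by (simp add: add_mset_commute)
  qed
next
  case (box a P n b G0)
  have "image_mset bx P \<subseteq># G" using box.prems by (intro sub_lemma[of "Or f g" G G0]) auto
  then have "image_mset bx P \<subseteq># add_mset f G" by (auto intro: sub_plus[where K="add_mset f {#}", simplified])
  then show ?case using box.hyps by (intro box_sub[of a P n b])
next
  case (dia a P e n b t G0)
  have "add_mset (DiaArr a b) (image_mset bx P) \<subseteq># G"
    using dia.prems by (intro sub_lemma[of "Or f g" G G0]) auto
  then have "add_mset (DiaArr a b) (image_mset bx P) \<subseteq># add_mset f G" by (auto intro: sub_plus[where K="add_mset f {#}", simplified])
  then show ?case using dia.hyps by (intro dia_sub[of a P e n b t])
next
  case (boxdia a P n b D G0)
  have "add_mset (DiaArr a b) (image_mset bx P) \<subseteq># G"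
    using boxdia.prems by (intro sub_lemma[of "Or f g" G G0]) auto
  then have "add_mset (DiaArr a b) (image_mset bx P) \<subseteq># add_mset f G" by (auto intro: sub_plus[where K="add_mset f {#}", simplified])
  then show ?case using boxdia.hyps by (intro boxdia_sub[of a P n b])
qed

lemma inv_or2: "SCh n G' D \<Longrightarrow> G' = add_mset (Or f g) G \<Longrightarrow> SCh n (add_mset g G) D"
proof (induction arbitrary: G rule: SCh.induct)
  case (init n p G0) then show ?case by (intro init') (auto dest: mem_other)
next
  case (botL D n G0) then show ?case by (intro botL') (auto dest: mem_other)
next
  case (andL n a b G0 D)
  show ?case
  proof (cases "And a b = Or f g")
    case True then show ?thesis by simp
  next
    case False
    obtain K where K: "G0 = add_mset (Or f g) K" "G = add_mset (And a b) K"
      using add_ne[OF andL.prems False] by blast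
    have "SCh n (add_mset a (add_mset b (add_mset g K))) D"
      using andL.IH[of "add_mset a (add_mset b K)"] K by (simp add: add_mset_commute)
    then have "SCh (Suc n) (add_mset (And a b) (add_mset g K)) D" by (rule SCh.andL)
    then show ?thesis using K by (simp add: add_mset_commute)
  qed
next
  case (andR n G0 a b) then show ?case by (auto intro: SCh.andR)
next
  case (orL n a G0 D b)
  show ?case
  proof (cases "Or a b = Or f g")
    case True then have "a = f" "b = g" "G0 = G" using orL.prems by auto
    then show ?thesis using orL.hyps(2) by (auto intro: SCh_mono)
  next
    case False
    obtain K where K: "G0 = add_mset (Or f g) K" "G = add_mset (Or a b) K"
      using add_ne[OF orL.prems False] by blast
    have "SCh n (add_mset a (add_mset g K)) D"
      using orL.IH(1)[of "add_mset a K"] K by (simp add: add_mset_commute)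
    moreover have "SCh n (add_mset b (add_mset g K)) D"
      using orL.IH(2)[of "add_mset b K"] K by (simp add: add_mset_commute)
    ultimately have "SCh (Suc n) (add_mset (Or a b) (add_mset g K)) D" by (rule SCh.orL)
    then show ?thesis using K by (simp add: add_mset_commute)
  qed
next
  case (orR1 n G0 a b) then show ?case by (auto intro: SCh.orR1)
next
  case (orR2 n G0 b a) then show ?case by (auto intro: SCh.orR2)
next
  case (impR n a G0 b)
  have "SCh n (add_mset a (add_mset g G)) {#b#}"
    using impR.IH[of "add_mset a G"] impR.prems by (simp add: add_mset_commute)
  then show ?case by (rule SCh.impR)
next
  case (impL n a b G0 D)
  show ?case
  proof (cases "Imp a b = Or f g")
    case True then show ?thesis by simp
  next
    case False
    obtain K where K: "G0 = add_mset (Or f g) K" "G = add_mset (Imp a b) K"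
      using add_ne[OF impL.prems False] by blast
    have "SCh n (add_mset (Imp a b) (add_mset g K)) {#a#}"
      using impL.IH(1)[of "add_mset (Imp a b) K"] K by (simp add: add_mset_commute)
    moreover have "SCh n (add_mset b (add_mset g K)) D"
      using impL.IH(2)[of "add_mset b K"] K by (simp add: add_mset_commute)
    ultimately have "SCh (Suc n) (add_mset (Imp a b) (add_mset g K)) D" by (rule SCh.impL)
    then show ?thesis using K by (simp add: add_mset_commute)
  qed
next
  case (box a P n b G0)
  have "image_mset bx P \<subseteq># G" using box.prems by (intro sub_lemma[of "Or f g" G G0]) auto
  then have "image_mset bx P \<subseteq># add_mset g G" by (auto intro: sub_plus[where K="add_mset g {#}", simplified])
  then show ?case using box.hyps by (intro box_sub[of a P n b])
next
  case (dia a P e n b t G0)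
  have "add_mset (DiaArr a b) (image_mset bx P) \<subseteq># G"
    using dia.prems by (intro sub_lemma[of "Or f g" G G0]) auto
  then have "add_mset (DiaArr a b) (image_mset bx P) \<subseteq># add_mset g G" by (auto intro: sub_plus[where K="add_mset g {#}", simplified])
  then show ?case using dia.hyps by (intro dia_sub[of a P e n b t])
next
  case (boxdia a P n b D G0)
  have "add_mset (DiaArr a b) (image_mset bx P) \<subseteq># G"
    using boxdia.prems by (intro sub_lemma[of "Or f g" G G0]) auto
  then have "add_mset (DiaArr a b) (image_mset bx P) \<subseteq># add_mset g G" by (auto intro: sub_plus[where K="add_mset g {#}", simplified])
  then show ?case using boxdia.hyps by (intro boxdia_sub[of a P n b])
qed

lemma inv_imp: "SCh n G' D \<Longrightarrow> G' = add_mset (Imp f g) G \<Longrightarrow> SCh n (add_mset g G) D"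
proof (induction arbitrary: G rule: SCh.induct)
  case (init n p G0) then show ?case by (intro init') (auto dest: mem_other)
next
  case (botL D n G0) then show ?case by (intro botL') (auto dest: mem_other)
next
  case (andL n a b G0 D)
  show ?case
  proof (cases "And a b = Imp f g")
    case True then show ?thesis by simp
  next
    case False
    obtain K where K: "G0 = add_mset (Imp f g) K" "G = add_mset (And a b) K"
      using add_ne[OF andL.prems False] by blast
    have "SCh n (add_mset a (add_mset b (add_mset g K))) D"
      using andL.IH[of "add_mset a (add_mset b K)"] K by (simp add: add_mset_commute)
    then have "SCh (Suc n) (add_mset (And a b) (add_mset g K)) D" by (rule SCh.andL)
    then show ?thesis using K by (simp add: add_mset_commute)
  qed
next
  case (andR n G0 a b) then show ?case by (auto intro: SCh.andR)
next
  case (orL n a G0 D b)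
  show ?case
  proof (cases "Or a b = Imp f g")
    case True then show ?thesis by simp
  next
    case False
    obtain K where K: "G0 = add_mset (Imp f g) K" "G = add_mset (Or a b) K"
      using add_ne[OF orL.prems False] by blast
    have "SCh n (add_mset a (add_mset g K)) D"
      using orL.IH(1)[of "add_mset a K"] K by (simp add: add_mset_commute)
    moreover have "SCh n (add_mset b (add_mset g K)) D"
      using orL.IH(2)[of "add_mset b K"] K by (simp add: add_mset_commute)
    ultimately have "SCh (Suc n) (add_mset (Or a b) (add_mset g K)) D" by (rule SCh.orL)
    then show ?thesis using K by (simp add: add_mset_commute)
  qed
next
  case (orR1 n G0 a b) then show ?case by (auto intro: SCh.orR1)
next
  case (orR2 n G0 b a) then show ?case by (auto intro: SCh.orR2)
next
  case (impR n a G0 b)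
  have "SCh n (add_mset a (add_mset g G)) {#b#}"
    using impR.IH[of "add_mset a G"] impR.prems by (simp add: add_mset_commute)
  then show ?case by (rule SCh.impR)
next
  case (impL n a b G0 D)
  show ?case
  proof (cases "Imp a b = Imp f g")
    case True then have "a = f" "b = g" "G0 = G" using impL.prems by auto
    then show ?thesis using impL.hyps(2) by (auto intro: SCh_mono)
  next
    case False
    obtain K where K: "G0 = add_mset (Imp f g) K" "G = add_mset (Imp a b) K"
      using add_ne[OF impL.prems False] by blast
    have "SCh n (add_mset (Imp a b) (add_mset g K)) {#a#}"
      using impL.IH(1)[of "add_mset (Imp a b) K"] K by (simp add: add_mset_commute)
    moreover have "SCh n (add_mset b (add_mset g K)) D"
      using impL.IH(2)[of "add_mset b K"] K by (simp add: add_mset_commute)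
    ultimately have "SCh (Suc n) (add_mset (Imp a b) (add_mset g K)) D" by (rule SCh.impL)
    then show ?thesis using K by (simp add: add_mset_commute)
  qed
next
  case (box a P n b G0)
  have "image_mset bx P \<subseteq># G" using box.prems by (intro sub_lemma[of "Imp f g" G G0]) auto
  then have "image_mset bx P \<subseteq># add_mset g G" by (auto intro: sub_plus[where K="add_mset g {#}", simplified])
  then show ?case using box.hyps by (intro box_sub[of a P n b])
next
  case (dia a P e n b t G0)
  have "add_mset (DiaArr a b) (image_mset bx P) \<subseteq># G"
    using dia.prems by (intro sub_lemma[of "Imp f g" G G0]) auto
  then have "add_mset (DiaArr a b) (image_mset bx P) \<subseteq># add_mset g G" by (auto intro: sub_plus[where K="add_mset g {#}", simplified])
  then show ?case using dia.hyps by (intro dia_sub[of a P e n b t])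
next
  case (boxdia a P n b D G0)
  have "add_mset (DiaArr a b) (image_mset bx P) \<subseteq># G"
    using boxdia.prems by (intro sub_lemma[of "Imp f g" G G0]) auto
  then have "add_mset (DiaArr a b) (image_mset bx P) \<subseteq># add_mset g G" by (auto intro: sub_plus[where K="add_mset g {#}", simplified])
  then show ?case using boxdia.hyps by (intro boxdia_sub[of a P n b])
qed


lemma twice_split:
  assumes "add_mset X (add_mset X G) = G0 + image_mset bx P"
  shows "(\<exists>G1. G0 = add_mset X G1 \<and> add_mset X G = G1 + image_mset bx P) \<or>
         (\<exists>r s P'. X = BoxArr r s \<and> P = add_mset (r,s) (add_mset (r,s) P') \<and>
                   add_mset X G = G0 + image_mset bx (add_mset (r,s) P'))"
proof (cases "X \<in># G0")
  case True then obtain G1 where "G0 = add_mset X G1" by (metis multi_member_split)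
  then show ?thesis using assms by auto
next
  case False
  have "X \<in># G0 + image_mset bx P" using assms[symmetric] by simp
  then have "X \<in># image_mset bx P" using False by simp
  then obtain r s where rs: "(r,s) \<in># P" "X = BoxArr r s" by auto
  then obtain P1 where P1: "P = add_mset (r,s) P1" by (metis multi_member_split)
  have e1: "add_mset X G = G0 + image_mset bx P1" using assms P1 rs by simp
  then have "X \<in># G0 + image_mset bx P1" by (metis union_single_eq_member)
  then have "X \<in># image_mset bx P1" using False by simp
  then obtain r' s' where "(r',s') \<in># P1" "X = BoxArr r' s'" by auto
  then have "(r,s) \<in># P1" using rs by simp
  then obtain P' where "P1 = add_mset (r,s) P'" by (metis multi_member_split)
  then show ?thesis using rs P1 e1 by auto
qed

lemma twice_split_dia:
  assumes "add_mset X (add_mset X G) = add_mset (DiaArr a b) (G0 + image_mset bx P)"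
  shows "(\<exists>G1. G0 = add_mset X G1 \<and> add_mset X G = add_mset (DiaArr a b) (G1 + image_mset bx P)) \<or>
         (\<exists>r s P'. X = BoxArr r s \<and> P = add_mset (r,s) (add_mset (r,s) P') \<and>
                   add_mset X G = add_mset (DiaArr a b) (G0 + image_mset bx (add_mset (r,s) P')))"
proof (cases "X = DiaArr a b")
  case True
  then have e: "add_mset X G = G0 + image_mset bx P" using assms by simp
  then have "X \<in># G0 + image_mset bx P" by (metis union_single_eq_member)
  then have "X \<in># G0" using True by auto
  then obtain G1 where "G0 = add_mset X G1" by (metis multi_member_split)
  then show ?thesis using e True by auto
next
  case False
  obtain K where K: "G0 + image_mset bx P = add_mset X K" "add_mset X G = add_mset (DiaArr a b) K"
    using add_ne[OF assms False] by metis
  have "X \<in># K" using K(2) False by (metis insert_noteq_member)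
  then obtain K' where K': "K = add_mset X K'" by (metis multi_member_split)
  have "add_mset X (add_mset X K') = G0 + image_mset bx P" using K K' by simp
  from twice_split[OF this] show ?thesis using K K' by auto
qed

lemma side_sub: "side f (add_mset x (add_mset x P)) \<Longrightarrow> side f (add_mset x P)"
  by (simp add: side_def)

lemma contr: "SCh n (add_mset X (add_mset X G)) D \<Longrightarrow> SCh n (add_mset X G) D"
proof (induction n arbitrary: X G D rule: less_induct)
  case (less n)
  from less.prems show ?case
  proof (cases rule: SCh.cases)
    case (init p G0)
    then have "Atom p \<in># add_mset X G" by (metis insert_noteq_member mset_add union_single_eq_member)
    then show ?thesis using init by (auto intro: init' SCh.init)
  next
    case (botL G0)
    then have "Bot \<in># add_mset X G" by (metis insert_noteq_member union_single_eq_member)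
    then show ?thesis using botL botL' by blast
  next
    case (andL m a b G0)
    show ?thesis
    proof (cases "And a b = X")
      case True
      then have G0: "G0 = add_mset X G" using andL by simp
      have "SCh m (add_mset a (add_mset b (add_mset a (add_mset b G)))) D"
        using inv_and[OF andL(3)[unfolded G0], of a b "add_mset a (add_mset b G)"] True andL
        by (simp add: add_mset_commute)
      then have "SCh m (add_mset a (add_mset a (add_mset b (add_mset b G)))) D" by (simp add: add_mset_commute)
      then have "SCh m (add_mset a (add_mset b (add_mset b G))) D" by (rule less.IH[rotated]) (use andL in simp)
      then have "SCh m (add_mset b (add_mset b (add_mset a G))) D" by (simp add: add_mset_commute)
      then have "SCh m (add_mset b (add_mset a G)) D" by (rule less.IH[rotated]) (use andL in simp)
      then have "SCh m (add_mset a (add_mset b G)) D" by (simp add: add_mset_commute)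
      then show ?thesis using andL True by (auto intro: SCh.andL)
    next
      case False
      obtain K where K: "G0 = add_mset X K" "add_mset X G = add_mset (And a b) K"
        using add_ne[OF andL(2)[symmetric] False] by metis
      have "X \<in># K" using K(2) False by (metis insert_noteq_member)
      then obtain K' where K': "K = add_mset X K'" by (metis multi_member_split)
      have "SCh m (add_mset X (add_mset X (add_mset a (add_mset b K')))) D"
        using andL K K' by (simp add: add_mset_commute)
      then have "SCh m (add_mset X (add_mset a (add_mset b K'))) D" by (rule less.IH[rotated]) (use andL in simp)
      then have "SCh (Suc m) (add_mset (And a b) (add_mset X K')) D"
        by (intro SCh.andL) (simp add: add_mset_commute)
      then show ?thesis using andL K K' by (simp add: add_mset_commute)
    qed
  next
    case (andR m a b)
    then show ?thesis using less.IH by (auto intro: SCh.andR)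
  next
    case (orL m a G0 b)
    show ?thesis
    proof (cases "Or a b = X")
      case True
      then have G0: "G0 = add_mset X G" using orL by simp
      have "SCh m (add_mset a (add_mset a G)) D"
        using inv_or1[OF orL(3)[unfolded G0], of a b "add_mset a G"] True orL
        by (simp add: add_mset_commute)
      then have 1: "SCh m (add_mset a G) D" by (rule less.IH[rotated]) (use orL in simp)
      have "SCh m (add_mset b (add_mset b G)) D"
        using inv_or2[OF orL(4)[unfolded G0], of a b "add_mset b G"] True orL
        by (simp add: add_mset_commute)
      then have 2: "SCh m (add_mset b G) D" by (rule less.IH[rotated]) (use orL in simp)
      show ?thesis using SCh.orL[OF 1 2] orL True by simp
    next
      case False
      obtain K where K: "G0 = add_mset X K" "add_mset X G = add_mset (Or a b) K"
        using add_ne[OF orL(2)[symmetric] False] by metis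
      have "X \<in># K" using K(2) False by (metis insert_noteq_member)
      then obtain K' where K': "K = add_mset X K'" by (metis multi_member_split)
      have "SCh m (add_mset X (add_mset X (add_mset a K'))) D"
        using orL K K' by (simp add: add_mset_commute)
      then have "SCh m (add_mset X (add_mset a K')) D" by (rule less.IH[rotated]) (use orL in simp)
      then have 1: "SCh m (add_mset a (add_mset X K')) D" by (simp add: add_mset_commute)
      have "SCh m (add_mset X (add_mset X (add_mset b K'))) D"
        using orL K K' by (simp add: add_mset_commute)
      then have "SCh m (add_mset X (add_mset b K')) D" by (rule less.IH[rotated]) (use orL in simp)
      then have 2: "SCh m (add_mset b (add_mset X K')) D" by (simp add: add_mset_commute)
      show ?thesis using SCh.orL[OF 1 2] orL K K' by (simp add: add_mset_commute)
    qed
  next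
    case (orR1 m a b)
    then show ?thesis using less.IH by (auto intro: SCh.orR1)
  next
    case (orR2 m b a)
    then show ?thesis using less.IH by (auto intro: SCh.orR2)
  next
    case (impR m a b)
    then have "SCh m (add_mset X (add_mset X (add_mset a G))) {#b#}" by (simp add: add_mset_commute)
    then have "SCh m (add_mset X (add_mset a G)) {#b#}" by (rule less.IH[rotated]) (use impR in simp)
    then have "SCh m (add_mset a (add_mset X G)) {#b#}" by (simp add: add_mset_commute)
    then show ?thesis using impR by (auto intro: SCh.impR)
  next
    case (impL m a b G0)
    show ?thesis
    proof (cases "Imp a b = X")
      case True
      then have G0: "G0 = add_mset X G" using impL by simp
      have "SCh m (add_mset X (add_mset X G)) {#a#}" using impL G0 by simp
      then have "SCh m (add_mset X G) {#a#}" by (rule less.IH[rotated]) (use impL in simp)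
      then have 1: "SCh m (add_mset (Imp a b) G) {#a#}" using True by simp
      have "SCh m (add_mset b (add_mset b G)) D"
        using inv_imp[OF impL(4)[unfolded G0], of a b "add_mset b G"] True impL
        by (simp add: add_mset_commute)
      then have 2: "SCh m (add_mset b G) D" by (rule less.IH[rotated]) (use impL in simp)
      show ?thesis using SCh.impL[OF 1 2] impL True by simp
    next
      case False
      obtain K where K: "G0 = add_mset X K" "add_mset X G = add_mset (Imp a b) K"
        using add_ne[OF impL(2)[symmetric] False] by metis
      have "X \<in># K" using K(2) False by (metis insert_noteq_member)
      then obtain K' where K': "K = add_mset X K'" by (metis multi_member_split)
      have "SCh m (add_mset X (add_mset X (add_mset (Imp a b) K'))) {#a#}"
        using impL K K' by (simp add: add_mset_commute)
      then have "SCh m (add_mset X (add_mset (Imp a b) K')) {#a#}" by (rule less.IH[rotated]) (use impL in simp)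
      then have 1: "SCh m (add_mset (Imp a b) (add_mset X K')) {#a#}" by (simp add: add_mset_commute)
      have "SCh m (add_mset X (add_mset X (add_mset b K'))) D"
        using impL K K' by (simp add: add_mset_commute)
      then have "SCh m (add_mset X (add_mset b K')) D" by (rule less.IH[rotated]) (use impL in simp)
      then have 2: "SCh m (add_mset b (add_mset X K')) D" by (simp add: add_mset_commute)
      show ?thesis using SCh.impL[OF 1 2] impL K K' by (simp add: add_mset_commute)
    qed
  next
    case (box a P m b G0)
    from twice_split[OF box(2)] show ?thesis
    proof (elim disjE exE conjE)
      fix G1 assume "G0 = add_mset X G1" "add_mset X G = G1 + image_mset bx P"
      then show ?thesis using box by (auto intro: SCh.box)
    next
      fix r s P' assume h: "X = BoxArr r s" "P = add_mset (r, s) (add_mset (r, s) P')"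
        "add_mset X G = G0 + image_mset bx (add_mset (r, s) P')"
      have "SCh m (add_mset s (add_mset s (image_mset snd P'))) {#b#}" using box h by simp
      then have "SCh m (add_mset s (image_mset snd P')) {#b#}" by (rule less.IH[rotated]) (use box in simp)
      then have "SCh m (image_mset snd (add_mset (r,s) P')) {#b#}" by simp
      moreover have "side a (add_mset (r,s) P')" using box h side_sub by metis
      ultimately show ?thesis using box h SCh.box by metis
    qed
  next
    case (dia a P e m b t G0)
    from twice_split_dia[OF dia(2)] show ?thesis
    proof (elim disjE exE conjE)
      fix G1 assume "G0 = add_mset X G1" "add_mset X G = add_mset (DiaArr a b) (G1 + image_mset bx P)"
      then show ?thesis using dia by (auto intro: SCh.dia)
    next
      fix r s P' assume h: "X = BoxArr r s" "P = add_mset (r, s) (add_mset (r, s) P')"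
        "add_mset X G = add_mset (DiaArr a b) (G0 + image_mset bx (add_mset (r, s) P'))"
      have "SCh m (add_mset s (add_mset s (add_mset b (image_mset snd P')))) {#t#}"
        using dia h by (simp add: add_mset_commute)
      then have "SCh m (add_mset s (add_mset b (image_mset snd P'))) {#t#}" by (rule less.IH[rotated]) (use dia in simp)
      then have "SCh m (add_mset b (image_mset snd (add_mset (r,s) P'))) {#t#}"
        by (simp add: add_mset_commute)
      moreover have "side a (add_mset (r,s) P')" using dia h side_sub by metis
      ultimately show ?thesis using dia h SCh.dia by metis
    qed
  next
    case (boxdia a P m b G0)
    from twice_split_dia[OF boxdia(2)] show ?thesis
    proof (elim disjE exE conjE)
      fix G1 assume "G0 = add_mset X G1" "add_mset X G = add_mset (DiaArr a b) (G1 + image_mset bx P)"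
      then show ?thesis using boxdia by (auto intro: SCh.boxdia)
    next
      fix r s P' assume h: "X = BoxArr r s" "P = add_mset (r, s) (add_mset (r, s) P')"
        "add_mset X G = add_mset (DiaArr a b) (G0 + image_mset bx (add_mset (r, s) P'))"
      have "SCh m (add_mset s (add_mset s (add_mset b (image_mset snd P')))) {#}"
        using boxdia h by (simp add: add_mset_commute)
      then have "SCh m (add_mset s (add_mset b (image_mset snd P'))) {#}" by (rule less.IH[rotated]) (use boxdia in simp)
      then have "SCh m (add_mset b (image_mset snd (add_mset (r,s) P'))) {#}"
        by (simp add: add_mset_commute)
      moreover have "side a (add_mset (r,s) P')" using boxdia h side_sub by metis
      ultimately show ?thesis using boxdia h SCh.boxdia by metis
    qed
  qed
qed


lemma sub_weak: "B \<subseteq># G + B + K"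
  by (metis add.commute mset_subset_eq_add_left union_assoc)
lemma sub_weak2: "add_mset x B \<subseteq># add_mset x (G + B) + K"
  by (metis add_mset_add_single mset_subset_eq_mono_add_right_cancel sub_weak union_assoc add.commute)

lemma SCh_weak: "SCh n G D \<Longrightarrow> SCh n (G + K) D"
proof (induction rule: SCh.induct)
  case (init n p G) then show ?case by (simp add: SCh.init)
next
  case (botL D n G) then show ?case by (simp add: SCh.botL)
next
  case (andL n f g G D) then show ?case by (simp add: SCh.andL)
next
  case (andR n G f g) then show ?case by (simp add: SCh.andR)
next
  case (orL n f G D g) then show ?case by (simp add: SCh.orL)
next
  case (orR1 n G f g) then show ?case by (simp add: SCh.orR1)
next
  case (orR2 n G g f) then show ?case by (simp add: SCh.orR2)
next
  case (impR n f G g) then show ?case by (simp add: SCh.impR)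
next
  case (impL n f g G D) then show ?case by (simp add: SCh.impL)
next
  case (box f P n g G) then show ?case by (intro box_sub[OF box(1,2)] sub_weak)
next
  case (dia f P e n g t G) then show ?case by (intro dia_sub[OF dia(1-4)]) (simp only: sub_weak2)
next
  case (boxdia f P n g D G) then show ?case by (intro boxdia_sub[OF boxdia(1-3)]) (simp only: sub_weak2)
qed

lemma SCh_rweak: "SCh n G D' \<Longrightarrow> D' = {#} \<Longrightarrow> size D \<le> 1 \<Longrightarrow> SCh n G D"
proof (induction arbitrary: D rule: SCh.induct)
  case (botL D n G) then show ?case by (simp add: SCh.botL)
next
  case (andL n f g G D) then show ?case by (simp add: SCh.andL)
next
  case (orL n f G D g) then show ?case by (simp add: SCh.orL)
next
  case (impL n f g G D) then show ?case by (simp add: SCh.impL)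
next
  case (boxdia f P n g D G) then show ?case by (simp add: SCh.boxdia)
qed auto

lemma SCh_size: "SCh n G D \<Longrightarrow> size D \<le> 1"
  by (induction rule: SCh.induct) auto

lemma SC_size: "SConstCK G D \<Longrightarrow> size D \<le> 1"
  using SC_SCh SCh_size by blast

lemma SC_weak: "SConstCK G D \<Longrightarrow> SConstCK (G + K) D"
  using SC_SCh SCh_sound SCh_weak by blast

lemma SC_weak1: "SConstCK G D \<Longrightarrow> SConstCK (add_mset x G) D"
  using SC_weak[of G D "{#x#}"] by simp

lemma SC_weak_sub: "SConstCK G D \<Longrightarrow> G \<subseteq># G' \<Longrightarrow> SConstCK G' D"
  by (metis SC_weak subset_mset.add_diff_inverse)

lemma SC_rweak: "SConstCK G {#} \<Longrightarrow> size D \<le> 1 \<Longrightarrow> SConstCK G D"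
  using SC_SCh SCh_sound SCh_rweak by blast

lemma SC_contr: "SConstCK (add_mset X (add_mset X G)) D \<Longrightarrow> SConstCK (add_mset X G) D"
  using SC_SCh SCh_sound contr by blast

lemma SC_contr_set: "SConstCK (G + S) D \<Longrightarrow> set_mset S \<subseteq> set_mset G \<Longrightarrow> SConstCK G D"
proof (induction S arbitrary: G rule: multiset_induct)
  case empty then show ?case by simp
next
  case (add x S)
  then have "x \<in># G" by auto
  then obtain G1 where G1: "G = add_mset x G1" by (metis multi_member_split)
  have "SConstCK (add_mset x (add_mset x (G1 + S))) D" using add.prems G1 by simp
  then have "SConstCK (add_mset x (G1 + S)) D" by (rule SC_contr)
  then have "SConstCK (G + S) D" using G1 by simp
  then show ?case using add by auto
qed

lemma SC_inv_and: "SConstCK (add_mset (And f g) G) D \<Longrightarrow> SConstCK (add_mset f (add_mset g G)) D"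
  using SC_SCh SCh_sound inv_and by blast
lemma SC_inv_or1: "SConstCK (add_mset (Or f g) G) D \<Longrightarrow> SConstCK (add_mset f G) D"
  using SC_SCh SCh_sound inv_or1 by blast
lemma SC_inv_or2: "SConstCK (add_mset (Or f g) G) D \<Longrightarrow> SConstCK (add_mset g G) D"
  using SC_SCh SCh_sound inv_or2 by blast
lemma SC_inv_imp: "SConstCK (add_mset (Imp f g) G) D \<Longrightarrow> SConstCK (add_mset g G) D"
  using SC_SCh SCh_sound inv_imp by blast

lemma box_m: "side f P \<Longrightarrow> SConstCK (image_mset snd P) {#g#} \<Longrightarrow>
   SConstCK (G + image_mset bx P) {#BoxArr f g#}"
  using SC_SCh SCh_sound SCh.box by metis
lemma dia_m: "side f P \<Longrightarrow> SConstCK {#f#} {#e#} \<Longrightarrow> SConstCK {#e#} {#f#} \<Longrightarrow>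
        SConstCK (add_mset g (image_mset snd P)) {#t#} \<Longrightarrow>
        SConstCK (add_mset (DiaArr f g) (G + image_mset bx P)) {#DiaArr e t#}"
  using SC_SCh SCh_sound SCh.dia by metis
lemma boxdia_m: "side f P \<Longrightarrow> SConstCK (add_mset g (image_mset snd P)) {#} \<Longrightarrow> size D \<le> 1 \<Longrightarrow>
        SConstCK (add_mset (DiaArr f g) (G + image_mset bx P)) D"
  using SC_SCh SCh_sound SCh.boxdia by metis

lemma SC_id: "SConstCK (add_mset A G) {#A#}"
proof (induction A arbitrary: G)
  case (Atom p) then show ?case by (rule SConstCK.init)
next
  case Bot then show ?case by (simp add: SConstCK.botL)
next
  case (And f g)
  have "SConstCK (add_mset f (add_mset g G)) {#f#}" by (rule And.IH(1))
  moreover have "SConstCK (add_mset f (add_mset g G)) {#g#}"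
    using And.IH(2)[of "add_mset f G"] by (simp add: add_mset_commute)
  ultimately show ?case by (intro SConstCK.andL SConstCK.andR)
next
  case (Or f g)
  show ?case by (intro SConstCK.orL SConstCK.orR1 SConstCK.orR2 Or.IH)
next
  case (Imp f g)
  have "SConstCK (add_mset (Imp f g) (add_mset f G)) {#f#}"
    using Imp.IH(1)[of "add_mset (Imp f g) G"] by (simp add: add_mset_commute)
  moreover have "SConstCK (add_mset g (add_mset f G)) {#g#}" by (rule Imp.IH(2))
  ultimately have "SConstCK (add_mset (Imp f g) (add_mset f G)) {#g#}" by (rule SConstCK.impL)
  then show ?case by (intro SConstCK.impR) (simp add: add_mset_commute)
next
  case (BoxArr f g)
  have "side f {#(f, g)#}" using BoxArr.IH(1)[of "{#}"] by (simp add: side_def)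
  moreover have "SConstCK (image_mset snd {#(f, g)#}) {#g#}" using BoxArr.IH(2)[of "{#}"] by simp
  ultimately have "SConstCK (G + image_mset bx {#(f, g)#}) {#BoxArr f g#}" by (rule box_m)
  then show ?case by simp
next
  case (DiaArr f g)
  have "side f {#}" by (simp add: side_def)
  moreover have "SConstCK {#f#} {#f#}" using DiaArr.IH(1)[of "{#}"] by simp
  moreover have "SConstCK (add_mset g (image_mset snd {#})) {#g#}" using DiaArr.IH(2)[of "{#}"] by simp
  ultimately have "SConstCK (add_mset (DiaArr f g) (G + image_mset bx {#})) {#DiaArr f g#}"
    by (intro dia_m)
  then show ?case by simp
qed


definition cutF :: "'a fm \<Rightarrow> bool" where
  "cutF A = (\<forall>G D. SConstCK G {#A#} \<longrightarrow> SConstCK (add_mset A G) D \<longrightarrow> SConstCK G D)"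

lemma cut_ind: "cutF B \<Longrightarrow> SConstCK G1 {#B#} \<Longrightarrow> SConstCK (add_mset B G2) D \<Longrightarrow> SConstCK (G1 + G2) D"
proof -
  assume c: "cutF B" and l: "SConstCK G1 {#B#}" and r: "SConstCK (add_mset B G2) D"
  have "SConstCK (G1 + G2) {#B#}" using l by (rule SC_weak)
  moreover have "SConstCK (add_mset B (G1 + G2)) D" using SC_weak[OF r, of G1] by (simp add: ac_simps)
  ultimately show ?thesis using c unfolding cutF_def by blast
qed

lemma SC_init': "Atom p \<in># G \<Longrightarrow> SConstCK G {#Atom p#}"
  by (metis SConstCK.init mset_add)
lemma SC_botL': "Bot \<in># G \<Longrightarrow> size D \<le> 1 \<Longrightarrow> SConstCK G D"
  by (metis SConstCK.botL mset_add)

lemma box_m_sub: "side f P \<Longrightarrow> SConstCK (image_mset snd P) {#g#} \<Longrightarrow> image_mset bx P \<subseteq># G \<Longrightarrow>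
   SConstCK G {#BoxArr f g#}"
  by (metis box_m subset_mset.diff_add)
lemma dia_m_sub: "side f P \<Longrightarrow> SConstCK {#f#} {#e#} \<Longrightarrow> SConstCK {#e#} {#f#} \<Longrightarrow>
        SConstCK (add_mset g (image_mset snd P)) {#t#} \<Longrightarrow>
        add_mset (DiaArr f g) (image_mset bx P) \<subseteq># G \<Longrightarrow> SConstCK G {#DiaArr e t#}"
  by (metis dia_m subset_mset.diff_add union_mset_add_mset_right)
lemma boxdia_m_sub: "side f P \<Longrightarrow> SConstCK (add_mset g (image_mset snd P)) {#} \<Longrightarrow> size D \<le> 1 \<Longrightarrow>
        add_mset (DiaArr f g) (image_mset bx P) \<subseteq># G \<Longrightarrow> SConstCK G D"
  by (metis boxdia_m subset_mset.diff_add union_mset_add_mset_right)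


lemma side_comb: "cutF f \<Longrightarrow> side a (add_mset (f, g) P1) \<Longrightarrow> side f Q \<Longrightarrow> side a (Q + P1)"
  unfolding side_def
proof (intro ballI, clarify)
  fix r s assume c: "cutF f" and sa: "\<forall>(r, s)\<in>#add_mset (f, g) P1. SConstCK {#a#} {#r#} \<and> SConstCK {#r#} {#a#}"
    and sf: "\<forall>(r, s)\<in>#Q. SConstCK {#f#} {#r#} \<and> SConstCK {#r#} {#f#}" and rs: "(r, s) \<in># Q + P1"
  have af: "SConstCK {#a#} {#f#}" "SConstCK {#f#} {#a#}" using sa by auto
  show "SConstCK {#a#} {#r#} \<and> SConstCK {#r#} {#a#}"
  proof (cases "(r, s) \<in># Q")
    case True
    then have "SConstCK {#f#} {#r#}" "SConstCK {#r#} {#f#}" using sf by auto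
    then show ?thesis using cut_ind[OF c af(1), of "{#}"] cut_ind[OF c, of "{#r#}" "{#}"] af(2) by simp
  next
    case False then show ?thesis using rs sa by auto
  qed
qed

lemma side_comb2: "cutF e \<Longrightarrow> side e P \<Longrightarrow> SConstCK {#f#} {#e#} \<Longrightarrow> SConstCK {#e#} {#f#} \<Longrightarrow>
   side f Q \<Longrightarrow> side f (Q + P)"
  unfolding side_def
proof (intro ballI, clarify)
  fix r s assume c: "cutF e" and se: "\<forall>(r, s)\<in>#P. SConstCK {#e#} {#r#} \<and> SConstCK {#r#} {#e#}"
    and fe: "SConstCK {#f#} {#e#}" "SConstCK {#e#} {#f#}"
    and sf: "\<forall>(r, s)\<in>#Q. SConstCK {#f#} {#r#} \<and> SConstCK {#r#} {#f#}" and rs: "(r, s) \<in># Q + P"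
  show "SConstCK {#f#} {#r#} \<and> SConstCK {#r#} {#f#}"
  proof (cases "(r, s) \<in># Q")
    case True then show ?thesis using sf by auto
  next
    case False
    then have "SConstCK {#e#} {#r#}" "SConstCK {#r#} {#e#}" using se rs by auto
    then show ?thesis using cut_ind[OF c fe(1), of "{#}"] cut_ind[OF c, of "{#r#}" "{#}"] fe(2) by simp
  qed
qed

lemma iff_trans: "cutF e \<Longrightarrow> SConstCK {#f#} {#e#} \<Longrightarrow> SConstCK {#e#} {#f#} \<Longrightarrow>
   SConstCK {#e#} {#e2#} \<Longrightarrow> SConstCK {#e2#} {#e#} \<Longrightarrow> SConstCK {#f#} {#e2#} \<and> SConstCK {#e2#} {#f#}"
  using cut_ind[of e "{#f#}" "{#}" "{#e2#}"] cut_ind[of e "{#e2#}" "{#}" "{#f#}"] by simp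

definition PB :: "'a fm \<Rightarrow> 'a fm \<Rightarrow> 'a fm multiset \<Rightarrow> bool" where
  "PB f g G = (\<exists>Q. side f Q \<and> SConstCK (image_mset snd Q) {#g#} \<and> set_mset (image_mset bx Q) \<subseteq> set_mset G)"

definition PD :: "'a fm \<Rightarrow> 'a fm \<Rightarrow> 'a fm multiset \<Rightarrow> bool" where
  "PD e t G = (\<exists>f g Q. side f Q \<and> SConstCK {#f#} {#e#} \<and> SConstCK {#e#} {#f#} \<and>
      SConstCK (add_mset g (image_mset snd Q)) {#t#} \<and>
      set_mset (add_mset (DiaArr f g) (image_mset bx Q)) \<subseteq> set_mset G)"

context fixes f g :: "'a fm" begin

lemma PA_and:

  shows "SConstCK (add_mset f (add_mset (And a b) K)) {#g#} \<Longrightarrow> SConstCK (add_mset f (add_mset a (add_mset b K))) {#g#}"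
  using SC_inv_and[of a b "add_mset f K"] by (simp add: add_mset_commute)
lemma PA_or1:

  shows "SConstCK (add_mset f (add_mset (Or a b) K)) {#g#} \<Longrightarrow> SConstCK (add_mset f (add_mset a K)) {#g#}"
  using SC_inv_or1[of a b "add_mset f K"] by (simp add: add_mset_commute)
lemma PA_or2:

  shows "SConstCK (add_mset f (add_mset (Or a b) K)) {#g#} \<Longrightarrow> SConstCK (add_mset f (add_mset b K)) {#g#}"
  using SC_inv_or2[of a b "add_mset f K"] by (simp add: add_mset_commute)
lemma PA_imp:

  shows "SConstCK (add_mset f (add_mset (Imp a b) K)) {#g#} \<Longrightarrow> SConstCK (add_mset f (add_mset b K)) {#g#}"
  using SC_inv_imp[of a b "add_mset f K"] by (simp add: add_mset_commute)
lemma PA_weak: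

  shows "SConstCK (add_mset f K) {#g#} \<Longrightarrow> SConstCK (add_mset f (add_mset a K)) {#g#}"
  using SC_weak1[of "add_mset f K" _ a] by (simp add: add_mset_commute)

lemma princ_imp:
  assumes cf: "cutF f" and cg: "cutF g"
  shows "SCh n G' D \<Longrightarrow> G' = add_mset (Imp f g) G \<Longrightarrow> SConstCK (add_mset f G) {#g#} \<Longrightarrow> SConstCK G D"
proof (induction arbitrary: G rule: SCh.induct)
  case (init n p G0) then show ?case by (intro SC_init') (auto dest: mem_other)
next
  case (botL D n G0) then show ?case by (intro SC_botL') (auto dest: mem_other)
next
  case (andL n a b G0 D)
  have False: "And a b \<noteq> Imp f g" by simp
  obtain K where K: "G0 = add_mset (Imp f g) K" "G = add_mset (And a b) K"
    using add_ne[OF andL.prems(1) False] by blast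
  have "SConstCK (add_mset f (add_mset a (add_mset b K))) {#g#}" using andL.prems(2) K by (metis PA_and)
  then have "SConstCK (add_mset a (add_mset b K)) D"
    using andL.IH[of "add_mset a (add_mset b K)"] K by (simp add: add_mset_commute)
  then show ?case using K by (simp add: SConstCK.andL)
next
  case (andR n G0 a b) then show ?case by (auto intro: SConstCK.andR)
next
  case (orL n a G0 D b)
  have False: "Or a b \<noteq> Imp f g" by simp
  obtain K where K: "G0 = add_mset (Imp f g) K" "G = add_mset (Or a b) K"
    using add_ne[OF orL.prems(1) False] by blast
  have "SConstCK (add_mset f (add_mset a K)) {#g#}" using orL.prems(2) K by (metis PA_or1)
  then have 1: "SConstCK (add_mset a K) D"
    using orL.IH(1)[of "add_mset a K"] K by (simp add: add_mset_commute)
  have "SConstCK (add_mset f (add_mset b K)) {#g#}" using orL.prems(2) K by (metis PA_or2)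
  then have 2: "SConstCK (add_mset b K) D"
    using orL.IH(2)[of "add_mset b K"] K by (simp add: add_mset_commute)
  show ?case using K SConstCK.orL[OF 1 2] by simp
next
  case (orR1 n G0 a b) then show ?case by (auto intro: SConstCK.orR1)
next
  case (orR2 n G0 b a) then show ?case by (auto intro: SConstCK.orR2)
next
  case (impR n a G0 b)
  have "SConstCK (add_mset f (add_mset a G)) {#g#}" using impR.prems(2) by (metis PA_weak)
  then have "SConstCK (add_mset a G) {#b#}"
    using impR.IH[of "add_mset a G"] impR.prems(1) by (simp add: add_mset_commute)
  then show ?case by (rule SConstCK.impR)
next
  case (impL n a b G0 D)
  show ?case
  proof (cases "Imp a b = Imp f g")
    case True then have e: "a = f" "b = g" "G0 = G" using impL.prems(1) by auto
    have 1: "SConstCK G {#f#}" using impL.IH(1)[of G] impL.prems e by simp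
    have 2: "SConstCK G {#g#}" using cf 1 impL.prems(2) unfolding cutF_def by blast
    have "SConstCK (add_mset g G) D" using impL.hyps(2) e by (simp add: SCh_sound)
    then show ?thesis using cg 2 unfolding cutF_def by blast
  next
    case False
    obtain K where K: "G0 = add_mset (Imp f g) K" "G = add_mset (Imp a b) K"
      using add_ne[OF impL.prems(1) False] by blast
    have 1: "SConstCK (add_mset (Imp a b) K) {#a#}"
      using impL.IH(1)[of "add_mset (Imp a b) K"] K impL.prems(2) by (simp add: add_mset_commute)
    have "SConstCK (add_mset f (add_mset b K)) {#g#}" using impL.prems(2) K by (metis PA_imp)
    then have 2: "SConstCK (add_mset b K) D"
      using impL.IH(2)[of "add_mset b K"] K by (simp add: add_mset_commute)
    show ?thesis using K SConstCK.impL[OF 1 2] by simp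
  qed
next
  case (box a P n b G0)
  have "image_mset bx P \<subseteq># G" using box.prems(1) by (intro sub_lemma[of "Imp f g" G G0]) auto
  then show ?case using box_m_sub[OF box.hyps(1) SCh_sound[OF box.hyps(2)]] by blast
next
  case (dia a P e n b t G0)
  have "add_mset (DiaArr a b) (image_mset bx P) \<subseteq># G"
    using dia.prems(1) by (intro sub_lemma[of "Imp f g" G G0]) auto
  then show ?case using dia_m_sub[OF dia.hyps(1-3) SCh_sound[OF dia.hyps(4)]] by blast
next
  case (boxdia a P n b D G0)
  have "add_mset (DiaArr a b) (image_mset bx P) \<subseteq># G"
    using boxdia.prems(1) by (intro sub_lemma[of "Imp f g" G G0]) auto
  then show ?case using boxdia_m_sub[OF boxdia.hyps(1) SCh_sound[OF boxdia.hyps(2)] boxdia.hyps(3)] by blast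
qed

end


context fixes f g :: "'a fm" begin

lemma PB_and:

  shows "PB f g (add_mset (And a b) K) \<Longrightarrow> PB f g (add_mset a (add_mset b K))"
  unfolding PB_def by (elim exE conjE, rule_tac x=Q in exI) fastforce
lemma PB_or1:

  shows "PB f g (add_mset (Or a b) K) \<Longrightarrow> PB f g (add_mset a K)"
  unfolding PB_def by (elim exE conjE, rule_tac x=Q in exI) fastforce
lemma PB_or2:

  shows "PB f g (add_mset (Or a b) K) \<Longrightarrow> PB f g (add_mset b K)"
  unfolding PB_def by (elim exE conjE, rule_tac x=Q in exI) fastforce
lemma PB_imp:

  shows "PB f g (add_mset (Imp a b) K) \<Longrightarrow> PB f g (add_mset b K)"
  unfolding PB_def by (elim exE conjE, rule_tac x=Q in exI) fastforce
lemma PB_weak: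

  shows "PB f g K \<Longrightarrow> PB f g (add_mset a K)"
  unfolding PB_def by (elim exE conjE, rule_tac x=Q in exI) fastforce

end

context fixes e t :: "'a fm" begin

lemma PD_and:

  shows "PD e t (add_mset (And a b) K) \<Longrightarrow> PD e t (add_mset a (add_mset b K))"
  unfolding PD_def apply (elim exE conjE) subgoal for f1 g1 Q by (rule exI[of _ f1], rule exI[of _ g1], rule exI[of _ Q]) fastforce done
lemma PD_or1:

  shows "PD e t (add_mset (Or a b) K) \<Longrightarrow> PD e t (add_mset a K)"
  unfolding PD_def apply (elim exE conjE) subgoal for f1 g1 Q by (rule exI[of _ f1], rule exI[of _ g1], rule exI[of _ Q]) fastforce done
lemma PD_or2:

  shows "PD e t (add_mset (Or a b) K) \<Longrightarrow> PD e t (add_mset b K)"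
  unfolding PD_def apply (elim exE conjE) subgoal for f1 g1 Q by (rule exI[of _ f1], rule exI[of _ g1], rule exI[of _ Q]) fastforce done
lemma PD_imp:

  shows "PD e t (add_mset (Imp a b) K) \<Longrightarrow> PD e t (add_mset b K)"
  unfolding PD_def apply (elim exE conjE) subgoal for f1 g1 Q by (rule exI[of _ f1], rule exI[of _ g1], rule exI[of _ Q]) fastforce done
lemma PD_weak:

  shows "PD e t K \<Longrightarrow> PD e t (add_mset a K)"
  unfolding PD_def apply (elim exE conjE) subgoal for f1 g1 Q by (rule exI[of _ f1], rule exI[of _ g1], rule exI[of _ Q]) fastforce done

end

lemma princ_box:
  fixes f g :: "'a fm"
  assumes cf: "cutF f" and cg: "cutF g"
  shows "SCh n G' D \<Longrightarrow> G' = add_mset (BoxArr f g) G \<Longrightarrow> PB f g G \<Longrightarrow> SConstCK G D"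
proof (induction arbitrary: G rule: SCh.induct)
  case (init n p G0) then show ?case by (intro SC_init') (auto dest: mem_other)
next
  case (botL D n G0) then show ?case by (intro SC_botL') (auto dest: mem_other)
next
  case (andL n a b G0 D)
  have False: "And a b \<noteq> BoxArr f g" by simp
  obtain K where K: "G0 = add_mset (BoxArr f g) K" "G = add_mset (And a b) K"
    using add_ne[OF andL.prems(1) False] by blast
  have "PB f g (add_mset a (add_mset b K))" using andL.prems(2) K by (metis PB_and)
  then have "SConstCK (add_mset a (add_mset b K)) D"
    using andL.IH[of "add_mset a (add_mset b K)"] K by (simp add: add_mset_commute)
  then show ?case using K by (simp add: SConstCK.andL)
next
  case (andR n G0 a b) then show ?case by (auto intro: SConstCK.andR)
next
  case (orL n a G0 D b)
  have False: "Or a b \<noteq> BoxArr f g" by simp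
  obtain K where K: "G0 = add_mset (BoxArr f g) K" "G = add_mset (Or a b) K"
    using add_ne[OF orL.prems(1) False] by blast
  have "PB f g (add_mset a K)" using orL.prems(2) K by (metis PB_or1)
  then have 1: "SConstCK (add_mset a K) D"
    using orL.IH(1)[of "add_mset a K"] K by (simp add: add_mset_commute)
  have "PB f g (add_mset b K)" using orL.prems(2) K by (metis PB_or2)
  then have 2: "SConstCK (add_mset b K) D"
    using orL.IH(2)[of "add_mset b K"] K by (simp add: add_mset_commute)
  show ?case using K SConstCK.orL[OF 1 2] by simp
next
  case (orR1 n G0 a b) then show ?case by (auto intro: SConstCK.orR1)
next
  case (orR2 n G0 b a) then show ?case by (auto intro: SConstCK.orR2)
next
  case (impR n a G0 b)
  have "PB f g (add_mset a G)" using impR.prems(2) by (metis PB_weak)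
  then have "SConstCK (add_mset a G) {#b#}"
    using impR.IH[of "add_mset a G"] impR.prems(1) by (simp add: add_mset_commute)
  then show ?case by (rule SConstCK.impR)
next
  case (impL n a b G0 D)
  show ?case
  proof (cases "Imp a b = BoxArr f g")
    case True then show ?thesis by simp
  next
    case False
    obtain K where K: "G0 = add_mset (BoxArr f g) K" "G = add_mset (Imp a b) K"
      using add_ne[OF impL.prems(1) False] by blast
    have 1: "SConstCK (add_mset (Imp a b) K) {#a#}"
      using impL.IH(1)[of "add_mset (Imp a b) K"] K impL.prems(2) by (simp add: add_mset_commute)
    have "PB f g (add_mset b K)" using impL.prems(2) K by (metis PB_imp)
    then have 2: "SConstCK (add_mset b K) D"
      using impL.IH(2)[of "add_mset b K"] K by (simp add: add_mset_commute)
    show ?thesis using K SConstCK.impL[OF 1 2] by simp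
  qed
next
  case (box a P n b G0)
  show ?case
  proof (cases "BoxArr f g \<in># G0")
    case True
    then obtain G1 where "G0 = add_mset (BoxArr f g) G1" by (metis multi_member_split)
    then have "image_mset bx P \<subseteq># G" using box.prems(1) by auto
    then show ?thesis using box_m_sub[OF box.hyps(1) SCh_sound[OF box.hyps(2)]] by blast
  next
    case False
    have "BoxArr f g \<in># G0 + image_mset bx P" using box.prems(1) by simp
    then have "BoxArr f g \<in># image_mset bx P" using False by simp
    then have "(f, g) \<in># P" by auto
    then obtain P1 where P1: "P = add_mset (f, g) P1" by (metis multi_member_split)
    have G: "G = G0 + image_mset bx P1" using box.prems(1) P1 by simp
    obtain Q where Q: "side f Q" "SConstCK (image_mset snd Q) {#g#}"
      "set_mset (image_mset bx Q) \<subseteq> set_mset G" using box.prems(2) unfolding PB_def by blast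
    have sd: "side a (Q + P1)" using side_comb[OF cf _ Q(1)] box.hyps(1) P1 by simp
    have "SConstCK (add_mset g (image_mset snd P1)) {#b#}" using SCh_sound[OF box.hyps(2)] P1 by simp
    then have "SConstCK (image_mset snd Q + image_mset snd P1) {#b#}" by (rule cut_ind[OF cg Q(2)])
    then have prem: "SConstCK (image_mset snd (Q + P1)) {#b#}" by simp
    have "SConstCK (G0 + image_mset bx (Q + P1)) {#BoxArr a b#}" by (rule box_m[OF sd prem])
    then have "SConstCK (G + image_mset bx Q) {#BoxArr a b#}" using G by (simp add: ac_simps)
    then show ?thesis using Q(3) by (rule SC_contr_set)
  qed
next
  case (dia a P e n b t G0)
  have False: "DiaArr a b \<noteq> BoxArr f g" by simp
  obtain K where K: "G0 + image_mset bx P = add_mset (BoxArr f g) K" "G = add_mset (DiaArr a b) K"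
    using add_ne[OF dia.prems(1) False] by metis
  show ?case
  proof (cases "BoxArr f g \<in># G0")
    case True
    then obtain G1 where "G0 = add_mset (BoxArr f g) G1" by (metis multi_member_split)
    then have "add_mset (DiaArr a b) (image_mset bx P) \<subseteq># G" using K by auto
    then show ?thesis using dia_m_sub[OF dia.hyps(1) dia.hyps(2,3) SCh_sound[OF dia.hyps(4)]] by blast
  next
    case False
    have "BoxArr f g \<in># G0 + image_mset bx P" using K by simp
    then have "BoxArr f g \<in># image_mset bx P" using False by simp
    then have "(f, g) \<in># P" by auto
    then obtain P1 where P1: "P = add_mset (f, g) P1" by (metis multi_member_split)
    have G: "G = add_mset (DiaArr a b) (G0 + image_mset bx P1)" using K P1 by simp
    obtain Q where Q: "side f Q" "SConstCK (image_mset snd Q) {#g#}"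
      "set_mset (image_mset bx Q) \<subseteq> set_mset G" using dia.prems(2) unfolding PB_def by blast
    have sd: "side a (Q + P1)" using side_comb[OF cf _ Q(1)] dia.hyps(1) P1 by simp
    have "SConstCK (add_mset g (add_mset b (image_mset snd P1))) {#t#}"
      using SCh_sound[OF dia.hyps(4)] P1 by (simp add: add_mset_commute)
    then have "SConstCK (image_mset snd Q + add_mset b (image_mset snd P1)) {#t#}" by (rule cut_ind[OF cg Q(2)])
    then have prem: "SConstCK (add_mset b (image_mset snd (Q + P1))) {#t#}" by simp
    have "SConstCK (add_mset (DiaArr a b) (G0 + image_mset bx (Q + P1))) {#DiaArr e t#}"
      by (rule dia_m[OF sd dia.hyps(2,3) prem])
    then have "SConstCK (G + image_mset bx Q) {#DiaArr e t#}" using G by (simp add: ac_simps)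
    then show ?thesis using Q(3) by (rule SC_contr_set)
  qed
next
  case (boxdia a P n b D G0)
  have False: "DiaArr a b \<noteq> BoxArr f g" by simp
  obtain K where K: "G0 + image_mset bx P = add_mset (BoxArr f g) K" "G = add_mset (DiaArr a b) K"
    using add_ne[OF boxdia.prems(1) False] by metis
  show ?case
  proof (cases "BoxArr f g \<in># G0")
    case True
    then obtain G1 where "G0 = add_mset (BoxArr f g) G1" by (metis multi_member_split)
    then have "add_mset (DiaArr a b) (image_mset bx P) \<subseteq># G" using K by auto
    then show ?thesis using boxdia_m_sub[OF boxdia.hyps(1) SCh_sound[OF boxdia.hyps(2)] boxdia.hyps(3)] by blast
  next
    case False
    have "BoxArr f g \<in># G0 + image_mset bx P" using K by simp
    then have "BoxArr f g \<in># image_mset bx P" using False by simp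
    then have "(f, g) \<in># P" by auto
    then obtain P1 where P1: "P = add_mset (f, g) P1" by (metis multi_member_split)
    have G: "G = add_mset (DiaArr a b) (G0 + image_mset bx P1)" using K P1 by simp
    obtain Q where Q: "side f Q" "SConstCK (image_mset snd Q) {#g#}"
      "set_mset (image_mset bx Q) \<subseteq> set_mset G" using boxdia.prems(2) unfolding PB_def by blast
    have sd: "side a (Q + P1)" using side_comb[OF cf _ Q(1)] boxdia.hyps(1) P1 by simp
    have "SConstCK (add_mset g (add_mset b (image_mset snd P1))) {#}"
      using SCh_sound[OF boxdia.hyps(2)] P1 by (simp add: add_mset_commute)
    then have "SConstCK (image_mset snd Q + add_mset b (image_mset snd P1)) {#}" by (rule cut_ind[OF cg Q(2)])
    then have prem: "SConstCK (add_mset b (image_mset snd (Q + P1))) {#}" by simp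
    have "SConstCK (add_mset (DiaArr a b) (G0 + image_mset bx (Q + P1))) D"
      by (rule boxdia_m[OF sd prem boxdia.hyps(3)])
    then have "SConstCK (G + image_mset bx Q) D" using G by (simp add: ac_simps)
    then show ?thesis using Q(3) by (rule SC_contr_set)
  qed
qed

lemma princ_dia:
  fixes e t :: "'a fm"
  assumes ce: "cutF e" and ct: "cutF t"
  shows "SCh n G' D \<Longrightarrow> G' = add_mset (DiaArr e t) G \<Longrightarrow> PD e t G \<Longrightarrow> SConstCK G D"
proof (induction arbitrary: G rule: SCh.induct)
  case (init n p G0) then show ?case by (intro SC_init') (auto dest: mem_other)
next
  case (botL D n G0) then show ?case by (intro SC_botL') (auto dest: mem_other)
next
  case (andL n a b G0 D)
  have False: "And a b \<noteq> DiaArr e t" by simp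
  obtain K where K: "G0 = add_mset (DiaArr e t) K" "G = add_mset (And a b) K"
    using add_ne[OF andL.prems(1) False] by blast
  have "PD e t (add_mset a (add_mset b K))" using andL.prems(2) K by (metis PD_and)
  then have "SConstCK (add_mset a (add_mset b K)) D"
    using andL.IH[of "add_mset a (add_mset b K)"] K by (simp add: add_mset_commute)
  then show ?case using K by (simp add: SConstCK.andL)
next
  case (andR n G0 a b) then show ?case by (auto intro: SConstCK.andR)
next
  case (orL n a G0 D b)
  have False: "Or a b \<noteq> DiaArr e t" by simp
  obtain K where K: "G0 = add_mset (DiaArr e t) K" "G = add_mset (Or a b) K"
    using add_ne[OF orL.prems(1) False] by blast
  have "PD e t (add_mset a K)" using orL.prems(2) K by (metis PD_or1)
  then have 1: "SConstCK (add_mset a K) D"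
    using orL.IH(1)[of "add_mset a K"] K by (simp add: add_mset_commute)
  have "PD e t (add_mset b K)" using orL.prems(2) K by (metis PD_or2)
  then have 2: "SConstCK (add_mset b K) D"
    using orL.IH(2)[of "add_mset b K"] K by (simp add: add_mset_commute)
  show ?case using K SConstCK.orL[OF 1 2] by simp
next
  case (orR1 n G0 a b) then show ?case by (auto intro: SConstCK.orR1)
next
  case (orR2 n G0 b a) then show ?case by (auto intro: SConstCK.orR2)
next
  case (impR n a G0 b)
  have "PD e t (add_mset a G)" using impR.prems(2) by (metis PD_weak)
  then have "SConstCK (add_mset a G) {#b#}"
    using impR.IH[of "add_mset a G"] impR.prems(1) by (simp add: add_mset_commute)
  then show ?case by (rule SConstCK.impR)
next
  case (impL n a b G0 D)
  show ?case
  proof (cases "Imp a b = DiaArr e t")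
    case True then show ?thesis by simp
  next
    case False
    obtain K where K: "G0 = add_mset (DiaArr e t) K" "G = add_mset (Imp a b) K"
      using add_ne[OF impL.prems(1) False] by blast
    have 1: "SConstCK (add_mset (Imp a b) K) {#a#}"
      using impL.IH(1)[of "add_mset (Imp a b) K"] K impL.prems(2) by (simp add: add_mset_commute)
    have "PD e t (add_mset b K)" using impL.prems(2) K by (metis PD_imp)
    then have 2: "SConstCK (add_mset b K) D"
      using impL.IH(2)[of "add_mset b K"] K by (simp add: add_mset_commute)
    show ?thesis using K SConstCK.impL[OF 1 2] by simp
  qed
next
  case (box a P n b G0)
  have "image_mset bx P \<subseteq># G" using box.prems(1) by (intro sub_lemma[of "DiaArr e t" G G0]) auto
  then show ?case using box_m_sub[OF box.hyps(1) SCh_sound[OF box.hyps(2)]] by blast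
next
  case (dia a P e2 n b t2 G0)
  show ?case
  proof (cases "DiaArr a b = DiaArr e t")
    case True
    then have ab: "a = e" "b = t" by auto
    then have G: "G = G0 + image_mset bx P" using dia.prems(1) by simp
    obtain f g Q where Q: "side f Q" "SConstCK {#f#} {#e#}" "SConstCK {#e#} {#f#}"
      "SConstCK (add_mset g (image_mset snd Q)) {#t#}"
      "set_mset (add_mset (DiaArr f g) (image_mset bx Q)) \<subseteq> set_mset G"
      using dia.prems(2) unfolding PD_def by blast
    have sd: "side f (Q + P)" using side_comb2[OF ce _ Q(2,3) Q(1)] dia.hyps(1) ab by simp
    have "SConstCK (add_mset t (image_mset snd P)) {#t2#}" using SCh_sound[OF dia.hyps(4)] ab by simp
    then have "SConstCK (add_mset g (image_mset snd Q) + image_mset snd P) {#t2#}" by (rule cut_ind[OF ct Q(4)])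
    then have prem: "SConstCK (add_mset g (image_mset snd (Q + P))) {#t2#}" by simp
    have "SConstCK {#e#} {#e2#}" "SConstCK {#e2#} {#e#}" using dia.hyps(2,3) ab by simp_all
    then have fe: "SConstCK {#f#} {#e2#}" "SConstCK {#e2#} {#f#}" using iff_trans[OF ce Q(2,3)] by blast+
    have "SConstCK (add_mset (DiaArr f g) (G0 + image_mset bx (Q + P))) {#DiaArr e2 t2#}" by (rule dia_m[OF sd fe prem])
    then have "SConstCK (G + add_mset (DiaArr f g) (image_mset bx Q)) {#DiaArr e2 t2#}" using G by (simp add: ac_simps)
    then show ?thesis using Q(5) by (rule SC_contr_set)
  next
    case False
    obtain K where K: "G0 + image_mset bx P = add_mset (DiaArr e t) K" "G = add_mset (DiaArr a b) K"
      using add_ne[OF dia.prems(1) False] by metis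
    have "image_mset bx P \<subseteq># K" using K(1) by (intro sub_lemma[of "DiaArr e t" K G0]) auto
    then have "add_mset (DiaArr a b) (image_mset bx P) \<subseteq># G" using K(2) by simp
    then show ?thesis using dia_m_sub[OF dia.hyps(1-3) SCh_sound[OF dia.hyps(4)]] by blast
  qed
next
  case (boxdia a P n b D G0)
  show ?case
  proof (cases "DiaArr a b = DiaArr e t")
    case True
    then have ab: "a = e" "b = t" by auto
    then have G: "G = G0 + image_mset bx P" using boxdia.prems(1) by simp
    obtain f g Q where Q: "side f Q" "SConstCK {#f#} {#e#}" "SConstCK {#e#} {#f#}"
      "SConstCK (add_mset g (image_mset snd Q)) {#t#}"
      "set_mset (add_mset (DiaArr f g) (image_mset bx Q)) \<subseteq> set_mset G"
      using boxdia.prems(2) unfolding PD_def by blast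
    have sd: "side f (Q + P)" using side_comb2[OF ce _ Q(2,3) Q(1)] boxdia.hyps(1) ab by simp
    have "SConstCK (add_mset t (image_mset snd P)) {#}" using SCh_sound[OF boxdia.hyps(2)] ab by simp
    then have "SConstCK (add_mset g (image_mset snd Q) + image_mset snd P) {#}" by (rule cut_ind[OF ct Q(4)])
    then have prem: "SConstCK (add_mset g (image_mset snd (Q + P))) {#}" by simp
    have "SConstCK (add_mset (DiaArr f g) (G0 + image_mset bx (Q + P))) D" by (rule boxdia_m[OF sd prem boxdia.hyps(3)])
    then have "SConstCK (G + add_mset (DiaArr f g) (image_mset bx Q)) D" using G by (simp add: ac_simps)
    then show ?thesis using Q(5) by (rule SC_contr_set)
  next
    case False
    obtain K where K: "G0 + image_mset bx P = add_mset (DiaArr e t) K" "G = add_mset (DiaArr a b) K"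
      using add_ne[OF boxdia.prems(1) False] by metis
    have "image_mset bx P \<subseteq># K" using K(1) by (intro sub_lemma[of "DiaArr e t" K G0]) auto
    then have "add_mset (DiaArr a b) (image_mset bx P) \<subseteq># G" using K(2) by simp
    then show ?thesis using boxdia_m_sub[OF boxdia.hyps(1) SCh_sound[OF boxdia.hyps(2)] boxdia.hyps(3)] by blast
  qed
qed

lemma cut_step_aux:
  fixes A :: "'a fm"
  assumes sIH: "\<And>B::'a fm. size B < size A \<Longrightarrow> cutF B"
  shows "SCh n G Dl \<Longrightarrow> Dl = {#A#} \<Longrightarrow> SConstCK (add_mset A G) D \<Longrightarrow> SConstCK G D"
proof (induction arbitrary: D rule: SCh.induct)
    case (init n p G0)
    then have "A = Atom p" by simp
    then show ?case using SC_contr[of "Atom p" G0 D] init.prems by simp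
  next
    case (botL Dl n G0)
    show ?case using SC_size[OF botL.prems(2)] by (intro SConstCK.botL) simp
  next
    case (andL n a b G0 Dl)
    have e1: "add_mset A (add_mset (And a b) G0) = add_mset (And a b) (add_mset A G0)"
      by (rule add_mset_commute)
    have "SConstCK (add_mset (And a b) (add_mset A G0)) D" using andL.prems(2) e1 by simp
    then have "SConstCK (add_mset a (add_mset b (add_mset A G0))) D" by (rule SC_inv_and)
    moreover have e2: "add_mset a (add_mset b (add_mset A G0)) = add_mset A (add_mset a (add_mset b G0))"
      by (simp add: add_mset_commute)
    ultimately have "SConstCK (add_mset A (add_mset a (add_mset b G0))) D" by simp
    then have "SConstCK (add_mset a (add_mset b G0)) D" by (rule andL.IH[OF andL.prems(1)])
    then show ?case by (rule SConstCK.andL)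
  next
    case (andR n G0 a b)
    then have A: "A = And a b" by simp
    have ca: "cutF a" using sIH[of a] A by simp
    have cb: "cutF b" using sIH[of b] A by simp
    have "SConstCK (add_mset a (add_mset b G0)) D" using SC_inv_and andR.prems(2) A by simp
    moreover have "SConstCK (add_mset b G0) {#a#}" using SCh_sound[OF andR.hyps(1)] by (rule SC_weak1)
    ultimately have "SConstCK (add_mset b G0) D" using ca unfolding cutF_def by blast
    then show ?case using cb SCh_sound[OF andR.hyps(2)] unfolding cutF_def by blast
  next
    case (orL n a G0 Dl b)
    have e1: "add_mset A (add_mset (Or a b) G0) = add_mset (Or a b) (add_mset A G0)"
      by (rule add_mset_commute)
    have o: "SConstCK (add_mset (Or a b) (add_mset A G0)) D" using orL.prems(2) e1 by simp
    have "SConstCK (add_mset a (add_mset A G0)) D" using o by (rule SC_inv_or1)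
    then have "SConstCK (add_mset A (add_mset a G0)) D" by (simp add: add_mset_commute)
    then have 1: "SConstCK (add_mset a G0) D" by (rule orL.IH(1)[OF orL.prems(1)])
    have "SConstCK (add_mset b (add_mset A G0)) D" using o by (rule SC_inv_or2)
    then have "SConstCK (add_mset A (add_mset b G0)) D" by (simp add: add_mset_commute)
    then have 2: "SConstCK (add_mset b G0) D" by (rule orL.IH(2)[OF orL.prems(1)])
    show ?case using 1 2 by (rule SConstCK.orL)
  next
    case (orR1 n G0 a b)
    then have A: "A = Or a b" by simp
    have ca: "cutF a" using sIH[of a] A by simp
    have "SConstCK (add_mset a G0) D" using SC_inv_or1 orR1.prems(2) A by simp
    then show ?case using ca SCh_sound[OF orR1.hyps(1)] unfolding cutF_def by blast
  next
    case (orR2 n G0 b a)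
    then have A: "A = Or a b" by simp
    have cb: "cutF b" using sIH[of b] A by simp
    have "SConstCK (add_mset b G0) D" using SC_inv_or2 orR2.prems(2) A by simp
    then show ?case using cb SCh_sound[OF orR2.hyps(1)] unfolding cutF_def by blast
  next
    case (impR n a G0 b)
    then have A: "A = Imp a b" by simp
    have ca: "cutF a" using sIH[of a] A by simp
    have cb: "cutF b" using sIH[of b] A by simp
    obtain m where "SCh m (add_mset A G0) D" using SC_SCh[OF impR.prems(2)] by blast
    then show ?case using princ_imp[OF ca cb] SCh_sound[OF impR.hyps(1)] A by blast
  next
    case (impL n a b G0 Dl)
    have e1: "add_mset A (add_mset (Imp a b) G0) = add_mset (Imp a b) (add_mset A G0)"
      by (rule add_mset_commute)
    have "SConstCK (add_mset (Imp a b) (add_mset A G0)) D" using impL.prems(2) e1 by simp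
    then have "SConstCK (add_mset b (add_mset A G0)) D" by (rule SC_inv_imp)
    then have "SConstCK (add_mset A (add_mset b G0)) D" by (simp add: add_mset_commute)
    then have "SConstCK (add_mset b G0) D" by (rule impL.IH(2)[OF impL.prems(1)])
    then show ?case using SCh_sound[OF impL.hyps(1)] by (rule SConstCK.impL[rotated])
  next
    case (box f P n g G0)
    then have A: "A = BoxArr f g" by simp
    have cf: "cutF f" using sIH[of f] A by simp
    have cg: "cutF g" using sIH[of g] A by simp
    obtain m where m: "SCh m (add_mset A (G0 + image_mset bx P)) D" using SC_SCh[OF box.prems(2)] by blast
    have "PB f g (G0 + image_mset bx P)" unfolding PB_def using box.hyps(1) SCh_sound[OF box.hyps(2)] by auto
    then show ?case using princ_box[OF cf cg m[unfolded A]] by blast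
  next
    case (dia f P e n g t G0)
    then have A: "A = DiaArr e t" by simp
    have ce: "cutF e" using sIH[of e] A by simp
    have ct: "cutF t" using sIH[of t] A by simp
    obtain m where m: "SCh m (add_mset A (add_mset (DiaArr f g) (G0 + image_mset bx P))) D"
      using SC_SCh[OF dia.prems(2)] by blast
    have "PD e t (add_mset (DiaArr f g) (G0 + image_mset bx P))" unfolding PD_def
      using dia.hyps(1-3) SCh_sound[OF dia.hyps(4)] by (intro exI[of _ f] exI[of _ g] exI[of _ P]) auto
    then show ?case using princ_dia[OF ce ct m[unfolded A]] by blast
  next
    case (boxdia f P n g Dl G0)
    then show ?case using boxdia_m[OF boxdia.hyps(1) SCh_sound[OF boxdia.hyps(2)] SC_size[OF boxdia.prems(2)]] by simp
qed

lemma cut_step: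
  fixes A :: "'a fm"
  assumes sIH: "\<And>B::'a fm. size B < size A \<Longrightarrow> cutF B"
  shows "cutF A"
  unfolding cutF_def
proof (intro allI impI)
  fix G D assume l: "SConstCK G {#A#}" and r: "SConstCK (add_mset A G) D"
  obtain n where "SCh n G {#A#}" using SC_SCh[OF l] by blast
  then show "SConstCK G D" using r cut_step_aux[OF sIH] by blast
qed

lemma cutF_all: "cutF A"
proof (induction A rule: measure_induct_rule[of size])
  case (less A) then show ?case by (rule cut_step)
qed

lemma cut: "SConstCK G {#A#} \<Longrightarrow> SConstCK (add_mset A G) D \<Longrightarrow> SConstCK G D"
  using cutF_all unfolding cutF_def by blast


lemma id_mem: "x \<in># G \<Longrightarrow> SConstCK G {#x#}"
  by (metis SC_id mset_add)

lemma impL_mem: "Imp a b \<in># G \<Longrightarrow> SConstCK G {#a#} \<Longrightarrow> SConstCK (add_mset b G) D \<Longrightarrow> SConstCK G D"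
proof -
  assume m: "Imp a b \<in># G" and l: "SConstCK G {#a#}" and r: "SConstCK (add_mset b G) D"
  have "SConstCK (add_mset (Imp a b) G) D" using SC_weak1[OF l] r by (rule SConstCK.impL)
  then have "SConstCK (G + {#Imp a b#}) D" by simp
  then show ?thesis using SC_contr_set[of G "{#Imp a b#}" D] m by simp
qed

lemma topR: "SConstCK G {#Top#}"
  unfolding Top_def Neg_def by (rule SConstCK.impR) (simp add: SConstCK.botL)
lemma mpL: "SConstCK {#g, Imp g h#} {#h#}"
  by (rule impL_mem[of g h]) (auto intro: id_mem)
lemma andR2: "SConstCK {#g, h#} {#And g h#}"
  by (intro SConstCK.andR id_mem) simp_all
lemma andL1: "SConstCK {#And g h#} {#g#}"
  using SConstCK.andL[of g h "{#}" "{#g#}"] id_mem[of g "{#g, h#}"] by simp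
lemma andL2: "SConstCK {#And g h#} {#h#}"
  using SConstCK.andL[of g h "{#}" "{#h#}"] id_mem[of h "{#g, h#}"] by simp

lemma iff_ext: "SConstCK {#} {#Iff a b#} \<Longrightarrow> SConstCK {#a#} {#b#} \<and> SConstCK {#b#} {#a#}"
proof -
  assume h: "SConstCK {#} {#Iff a b#}"
  have 1: "SConstCK {#a#} {#b#}"
  proof (rule cut)
    show "SConstCK {#a#} {#Iff a b#}" using SC_weak1[OF h] by simp
    show "SConstCK (add_mset (Iff a b) {#a#}) {#b#}" unfolding Iff_def
      by (rule SConstCK.andL, rule impL_mem[of a b]) (auto intro: id_mem)
  qed
  have 2: "SConstCK {#b#} {#a#}"
  proof (rule cut)
    show "SConstCK {#b#} {#Iff a b#}" using SC_weak1[OF h] by simp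
    show "SConstCK (add_mset (Iff a b) {#b#}) {#a#}" unfolding Iff_def
      by (rule SConstCK.andL, rule impL_mem[of b a]) (auto intro: id_mem)
  qed
  show ?thesis using 1 2 by blast
qed

lemma iffR: "SConstCK {#a#} {#b#} \<Longrightarrow> SConstCK {#b#} {#a#} \<Longrightarrow> SConstCK {#} {#Iff a b#}"
  unfolding Iff_def by (intro SConstCK.andR SConstCK.impR) simp_all

lemma side1: "SConstCK {#f#} {#r#} \<Longrightarrow> SConstCK {#r#} {#f#} \<Longrightarrow> side f {#(r, s)#}"
  by (simp add: side_def)

lemma complete: "ConstCK A \<Longrightarrow> SConstCK {#} {#A#}"
proof (induction rule: ConstCK.induct)
  case (A1 f g) show ?case by (intro SConstCK.impR) (auto intro: id_mem)
next
  case (A2 f g h)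
  let ?G = "{#f, Imp f g, Imp f (Imp g h)#}"
  have "SConstCK ?G {#h#}"
    apply (rule impL_mem[of f g], simp, rule id_mem, simp)
    apply (rule impL_mem[of f "Imp g h"], simp, rule id_mem, simp)
    apply (rule impL_mem[of g h], simp, rule id_mem, simp)
    apply (rule id_mem, simp)
    done
  then show ?case by (intro SConstCK.impR) (simp add: add_mset_commute)
next
  case (A3 f g) show ?case by (intro SConstCK.impR SConstCK.andL) (auto intro: id_mem)
next
  case (A4 f g) show ?case by (intro SConstCK.impR SConstCK.andL) (auto intro: id_mem)
next
  case (A5 f g) show ?case by (intro SConstCK.impR SConstCK.andR) (auto intro: id_mem)
next
  case (A6 f g) show ?case by (intro SConstCK.impR SConstCK.orR1) (auto intro: id_mem)
next
  case (A7 g f) show ?case by (intro SConstCK.impR SConstCK.orR2) (auto intro: id_mem)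
next
  case (A8 f h g)
  have "SConstCK (add_mset (Or f g) {#Imp g h, Imp f h#}) {#h#}"
    apply (rule SConstCK.orL)
     apply (rule impL_mem[of f h], simp, rule id_mem, simp, rule id_mem, simp)
    apply (rule impL_mem[of g h], simp, rule id_mem, simp, rule id_mem, simp)
    done
  then show ?case by (intro SConstCK.impR) (simp add: add_mset_commute)
next
  case (A9 f) show ?case by (intro SConstCK.impR) (simp add: SConstCK.botL)
next
  case (MP f g)
  have "SConstCK {#Imp f g#} {#g#}"
    by (rule impL_mem[of f g]) (auto intro: id_mem SC_weak1[OF MP.IH(2), simplified])
  then show ?case using cut[OF MP.IH(1)] by simp
next
  case (CM_box f g h)
  have "SConstCK ({#} + image_mset bx {#(f, And g h)#}) {#BoxArr f g#}"
    by (rule box_m) (auto simp: side_def intro: id_mem andL1)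
  moreover have "SConstCK ({#} + image_mset bx {#(f, And g h)#}) {#BoxArr f h#}"
    by (rule box_m) (auto simp: side_def intro: id_mem andL2)
  ultimately show ?case by (intro SConstCK.impR SConstCK.andR) simp_all
next
  case (CC_box f g h)
  have "SConstCK ({#} + image_mset bx {#(f, g), (f, h)#}) {#BoxArr f (And g h)#}"
    by (rule box_m) (auto simp: side_def intro: id_mem andR2)
  then show ?case by (intro SConstCK.impR SConstCK.andL) (simp add: add_mset_commute)
next
  case (CN_box f)
  have "SConstCK ({#} + image_mset bx {#}) {#BoxArr f Top#}"
    by (rule box_m) (auto simp: side_def intro: topR)
  then show ?case by simp
next
  case (CN_dia f)
  have "SConstCK (add_mset (DiaArr f Bot) ({#} + image_mset bx {#})) {#Bot#}"
    by (rule boxdia_m) (auto simp: side_def intro: SConstCK.botL)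
  then show ?case unfolding Neg_def by (intro SConstCK.impR) simp
next
  case (CK_dia f g h)
  have "SConstCK (add_mset (DiaArr f g) ({#} + image_mset bx {#(f, Imp g h)#})) {#DiaArr f h#}"
    by (rule dia_m) (auto simp: side_def intro: id_mem mpL)
  then show ?case by (intro SConstCK.impR) simp
next
  case (RA_box f r g)
  have fr: "SConstCK {#f#} {#r#}" "SConstCK {#r#} {#f#}" using iff_ext[OF RA_box.IH] by blast+
  have 1: "SConstCK ({#} + image_mset bx {#(f, g)#}) {#BoxArr r g#}"
    by (rule box_m) (auto simp: side_def fr intro: id_mem)
  have 2: "SConstCK ({#} + image_mset bx {#(r, g)#}) {#BoxArr f g#}"
    by (rule box_m) (auto simp: side_def fr intro: id_mem)
  show ?case using 1 2 by (intro iffR) simp_all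
next
  case (RC_box g h f)
  have gh: "SConstCK {#g#} {#h#}" "SConstCK {#h#} {#g#}" using iff_ext[OF RC_box.IH] by blast+
  have 1: "SConstCK ({#} + image_mset bx {#(f, g)#}) {#BoxArr f h#}"
    by (rule box_m) (auto simp: side_def gh intro: id_mem)
  have 2: "SConstCK ({#} + image_mset bx {#(f, h)#}) {#BoxArr f g#}"
    by (rule box_m) (auto simp: side_def gh intro: id_mem)
  show ?case using 1 2 by (intro iffR) simp_all
next
  case (RA_dia f r g)
  have fr: "SConstCK {#f#} {#r#}" "SConstCK {#r#} {#f#}" using iff_ext[OF RA_dia.IH] by blast+
  have 1: "SConstCK (add_mset (DiaArr f g) ({#} + image_mset bx {#})) {#DiaArr r g#}"
    by (rule dia_m) (auto simp: side_def fr intro: id_mem)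
  have 2: "SConstCK (add_mset (DiaArr r g) ({#} + image_mset bx {#})) {#DiaArr f g#}"
    by (rule dia_m) (auto simp: side_def fr intro: id_mem)
  show ?case using 1 2 by (intro iffR) simp_all
next
  case (RC_dia g h f)
  have gh: "SConstCK {#g#} {#h#}" "SConstCK {#h#} {#g#}" using iff_ext[OF RC_dia.IH] by blast+
  have 1: "SConstCK (add_mset (DiaArr f g) ({#} + image_mset bx {#})) {#DiaArr f h#}"
    by (rule dia_m) (auto simp: side_def gh intro: id_mem)
  have 2: "SConstCK (add_mset (DiaArr f h) ({#} + image_mset bx {#})) {#DiaArr f g#}"
    by (rule dia_m) (auto simp: side_def gh intro: id_mem)
  show ?case using 1 2 by (intro iffR) simp_all
qed

lemma conj_R: "xs \<noteq> [] \<Longrightarrow> set xs \<subseteq> set_mset G \<Longrightarrow> SConstCK G {#conj_list xs#}"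
  by (induction xs rule: conj_list.induct) (auto intro: id_mem SConstCK.andR)

lemma complete_iota:
  assumes c: "ConstCK (iota xs ys)" and s: "size D \<le> 1" and m: "mset xs = G" "mset ys = D"
  shows "SConstCK G D"
proof -
  have h: "SConstCK {#} {#iota xs ys#}" using c by (rule complete)
  have d: "SConstCK G {#disj_list ys#}"
  proof (cases "xs = []")
    case True then show ?thesis using h m by (simp add: iota_def)
  next
    case False
    then have "SConstCK G {#Imp (conj_list xs) (disj_list ys)#}"
      using SC_weak[OF h, of G] by (simp add: iota_def)
    moreover have "SConstCK (add_mset (Imp (conj_list xs) (disj_list ys)) G) {#disj_list ys#}"
      by (rule impL_mem[of "conj_list xs" "disj_list ys"]) 
         (use False m in \<open>auto intro: id_mem SC_weak1 conj_R\<close>)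
    ultimately show ?thesis by (rule cut)
  qed
  show ?thesis
  proof (cases ys)
    case Nil
    then have "SConstCK G {#Bot#}" using d by simp
    moreover have "SConstCK (add_mset Bot G) {#}" by (simp add: SConstCK.botL)
    ultimately show ?thesis using m Nil by (auto intro: cut)
  next
    case (Cons y ys')
    then have "ys' = []" using s m by (cases ys') auto
    then show ?thesis using Cons d m by simp
  qed
qed

theorem theorem5:
  fixes \<Gamma> \<Delta> :: "'a fm multiset" and xs ys :: "'a fm list"
  assumes "size \<Delta> \<le> 1" and "mset xs = \<Gamma>" and "mset ys = \<Delta>"
  shows "SConstCK \<Gamma> \<Delta> \<longleftrightarrow> ConstCK (iota xs ys)"
  using assms sound_iota complete_iota by metis


end
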